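(* Let $V\subseteq\mathcal V$ be finite, $\mathbb E,\mathbb F\in\mathit{NProg}(V)$, and $V'\subseteq\mathcal V$ with $|V'|=|V|$ and $V\cap V'=\emptyset$. Then (1) $\mathbb E\le_T^s\mathbb F$ iff $\mathbb F\models_{tot}(\mathbb E^\dagger(\{\Omega_{V,V'}\}),\{\Omega_{V,V'}\})$; (2) $\mathbb E\le_P^s\mathbb F$ iff $\mathbb F\models_{par}(I-\mathbb E^\dagger(\{\Omega_{V,V'}\}),\{I-\Omega_{V,V'}\})$.
   Context: $\mathcal V$ is a countably infinite set of qubit variables; $\mathcal H_V=\bigotimes_{q\in V}\mathcal H_q$. $\mathcal D(\mathcal H)$: partial density operators; $\mathcal P(\mathcal H)$: effects. $\mathit{DProg}(V)$: completely positive trace-nonincreasing super-operators on $\mathcal L(\mathcal H_V)$; $\mathit{NProg}(V)$: nonempty convex closed subsets of $\mathit{DProg}(V)$. Operators/super-operators on subsystems are implicitly extended by tensoring with identities. $\mathcal E^\dagger$ is the adjoint (${\rm tr}(\mathcal E(A)B)={\rm tr}(A\mathcal E^\dagger(B))$); for a set of effects $\Psi$, $\mathbb E^\dagger(\Psi)=\{\mathcal E^\dagger(N):\mathcal E\in\mathbb E,N\in\Psi\}$ (this is $wp^s.\mathbb E.\Psi$), and $I-\Theta=\{I-M:M\in\Theta\}$ (so $I-\mathbb E^\dagger(I-\Psi)=wlp^s.\mathbb E.\Psi$). With $d=2^{|V|}$, $\Omega_{V,V'}=|\omega\rangle\langle\omega|$, $|\omega\rangle=\frac1{\sqrt d}\sum_i|i\rangle_V|i\rangle_{V'}$,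 and $I$ is the identity on $\mathcal H_V\otimes\mathcal H_{V'}$. $\mathrm{Exp}_{dem}(\rho\models\Theta)=\inf_{M\in\Theta}{\rm tr}(M\rho)$ (${\rm tr}(\rho)$ if $\Theta=\emptyset$). $\mathbb E\models_{tot}(\Theta,\Psi)$ iff for all finite $X\supseteq V\cup W$ and $\rho\in\mathcal D(\mathcal H_X)$, $\mathrm{Exp}_{dem}(\rho\models\Theta)\le\inf_{\mathcal E\in\mathbb E}\mathrm{Exp}_{dem}(\mathcal E(\rho)\models\Psi)$; $\mathbb E\models_{par}(\Theta,\Psi)$ iff for all such $X,\rho$, $\mathrm{Exp}_{dem}(\rho\models\Theta)\le\inf_{\mathcal E\in\mathbb E}[\mathrm{Exp}_{dem}(\mathcal E(\rho)\models\Psi)+{\rm tr}(\rho)-{\rm tr}(\mathcal E(\rho))]$. $\mathbb E\le_T^s\mathbb F$ (resp. $\le_P^s$) iff for every finite $W$ and all $\Theta,\Psi\subseteq\mathcal P(\mathcal H_W)$, $\mathbb E\models_{tot}(\Theta,\Psi)\Rightarrow\mathbb F\models_{tot}(\Theta,\Psi)$ (resp. with $\models_{par}$). *)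

theory Defs
  imports Complex_Main
begin

text \<open>A computational-basis state of the register X is a Boolean assignment
that is False outside X.  Operators on H_X are complex matrices indexed by
such basis states; entries outside the basis of X are required to be 0.\<close>

type_synonym qvar = nat
type_synonym bst = "qvar \<Rightarrow> bool"
type_synonym qop = "bst \<Rightarrow> bst \<Rightarrow> complex"
type_synonym sop = "qop \<Rightarrow> qop"

definition basis :: "qvar set \<Rightarrow> bst set" where
  "basis X = {s. \<forall>q. q \<notin> X \<longrightarrow> \<not> s q}"

definition restr :: "qvar set \<Rightarrow> bst \<Rightarrow> bst" where
  "restr V s = (\<lambda>q. if q \<in> V then s q else False)"

definition merge :: "qvar set \<Rightarrow> bst \<Rightarrow> bst \<Rightarrow> bst" where
  "merge V s t = (\<lambda>q. if q \<in> V then s q else t q)"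

definition op_on :: "qvar set \<Rightarrow> qop \<Rightarrow> bool" where
  "op_on X A \<longleftrightarrow> (\<forall>s t. s \<notin> basis X \<or> t \<notin> basis X \<longrightarrow> A s t = 0)"

definition zero_op :: qop where
  "zero_op = (\<lambda>s t. 0)"

definition ident :: "qvar set \<Rightarrow> qop" where
  "ident X = (\<lambda>s t. if s \<in> basis X \<and> s = t then 1 else 0)"

definition ebasis :: "qvar set \<Rightarrow> bst \<Rightarrow> bst \<Rightarrow> qop" where
  "ebasis X u v = (\<lambda>s t. if u \<in> basis X \<and> v \<in> basis X \<and> s = u \<and> t = v then 1 else 0)"

definition mult :: "qvar set \<Rightarrow> qop \<Rightarrow> qop \<Rightarrow> qop" where
  "mult X A B = (\<lambda>s t. \<Sum>u\<in>basis X. A s u * B u t)"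

definition trace :: "qvar set \<Rightarrow> qop \<Rightarrow> complex" where
  "trace X A = (\<Sum>s\<in>basis X. A s s)"

definition minus_op :: "qop \<Rightarrow> qop \<Rightarrow> qop" where
  "minus_op A B = (\<lambda>s t. A s t - B s t)"

definition qform :: "qvar set \<Rightarrow> qop \<Rightarrow> (bst \<Rightarrow> complex) \<Rightarrow> complex" where
  "qform X A \<psi> = (\<Sum>s\<in>basis X. \<Sum>t\<in>basis X. cnj (\<psi> s) * A s t * \<psi> t)"

definition psd :: "qvar set \<Rightarrow> qop \<Rightarrow> bool" where
  "psd X A \<longleftrightarrow> op_on X A \<and> (\<forall>\<psi>. Im (qform X A \<psi>) = 0 \<and> 0 \<le> Re (qform X A \<psi>))"

definition pdo :: "qvar set \<Rightarrow> qop \<Rightarrow> bool" where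
  "pdo X \<rho> \<longleftrightarrow> psd X \<rho> \<and> Re (trace X \<rho>) \<le> 1"

definition effect :: "qvar set \<Rightarrow> qop \<Rightarrow> bool" where
  "effect X M \<longleftrightarrow> psd X M \<and> psd X (minus_op (ident X) M)"

text \<open>Implicit extension of an operator on H_V to H_X (V \<subseteq> X): A \<otimes> I.\<close>
definition ext :: "qvar set \<Rightarrow> qvar set \<Rightarrow> qop \<Rightarrow> qop" where
  "ext V X A = (\<lambda>s t. if s \<in> basis X \<and> t \<in> basis X \<and> (\<forall>q\<in>X - V. s q = t q)
                        then A (restr V s) (restr V t) else 0)"

text \<open>Implicit extension of a super-operator on L(H_V) to L(H_X) (V \<subseteq> X):
  E \<otimes> id, defined blockwise: ((E\<otimes>id) \<rho>)(s,t) = E(\<rho>_{ab})(s|V,t|V) where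
  a,b are the parts of s,t outside V.\<close>
definition superext :: "qvar set \<Rightarrow> qvar set \<Rightarrow> sop \<Rightarrow> sop" where
  "superext V X E \<rho> = (\<lambda>s t. if s \<in> basis X \<and> t \<in> basis X then
      E (\<lambda>s' t'. if s' \<in> basis V \<and> t' \<in> basis V then \<rho> (merge V s' s) (merge V t' t) else 0)
        (restr V s) (restr V t)
    else 0)"

text \<open>Adjoint of a super-operator G on L(H_X): tr(G(A) B) = tr(A G^dagger(B)).\<close>
definition sadj :: "qvar set \<Rightarrow> sop \<Rightarrow> sop" where
  "sadj X G B = (\<lambda>v u. if v \<in> basis X \<and> u \<in> basis X
                        then trace X (mult X (G (ebasis X u v)) B) else 0)"

text \<open>A super-operator is represented by a function that is linear on L(H_V),
  maps L(H_V) to L(H_V), and is normalised to 0 outside L(H_V).\<close>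
definition DProg :: "qvar set \<Rightarrow> sop set" where
  "DProg V = {E.
     (\<forall>A. \<not> op_on V A \<longrightarrow> E A = zero_op) \<and>
     (\<forall>A. op_on V A \<longrightarrow> op_on V (E A)) \<and>
     (\<forall>A B. op_on V A \<and> op_on V B \<longrightarrow> E (\<lambda>s t. A s t + B s t) = (\<lambda>s t. E A s t + E B s t)) \<and>
     (\<forall>A c. op_on V A \<longrightarrow> E (\<lambda>s t. c * A s t) = (\<lambda>s t. c * E A s t)) \<and>
     (\<forall>X \<rho>. finite X \<and> V \<subseteq> X \<and> psd X \<rho> \<longrightarrow> psd X (superext V X E \<rho>)) \<and>
     (\<forall>\<rho>. psd V \<rho> \<longrightarrow> Re (trace V (E \<rho>)) \<le> Re (trace V \<rho>))}"

definition sop_convex :: "sop set \<Rightarrow> bool" where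
  "sop_convex S \<longleftrightarrow> (\<forall>E\<in>S. \<forall>F\<in>S. \<forall>p::real. 0 \<le> p \<and> p \<le> 1 \<longrightarrow>
      (\<lambda>A s t. complex_of_real p * E A s t + complex_of_real (1 - p) * F A s t) \<in> S)"

text \<open>Closedness (finite-dimensional, so w.r.t. entrywise convergence).\<close>
definition sop_closed :: "sop set \<Rightarrow> bool" where
  "sop_closed S \<longleftrightarrow> (\<forall>f E. (\<forall>n. f n \<in> S) \<and> (\<forall>A s t. (\<lambda>n. f n A s t) \<longlonglongrightarrow> E A s t)
      \<longrightarrow> E \<in> S)"

definition NProg :: "qvar set \<Rightarrow> sop set set" where
  "NProg V = {S. S \<noteq> {} \<and> S \<subseteq> DProg V \<and> sop_convex S \<and> sop_closed S}"

definition exp_dem :: "qvar set \<Rightarrow> qvar set \<Rightarrow> qop set \<Rightarrow> qop \<Rightarrow> real" where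
  "exp_dem W X \<Theta> \<rho> = (if \<Theta> = {} then Re (trace X \<rho>)
      else (INF M\<in>\<Theta>. Re (trace X (mult X (ext W X M) \<rho>))))"

definition models_tot :: "qvar set \<Rightarrow> qvar set \<Rightarrow> sop set \<Rightarrow> qop set \<Rightarrow> qop set \<Rightarrow> bool" where
  "models_tot V W E \<Theta> \<Psi> \<longleftrightarrow> (\<forall>X \<rho>. finite X \<and> V \<union> W \<subseteq> X \<and> pdo X \<rho> \<longrightarrow>
      exp_dem W X \<Theta> \<rho> \<le> (INF \<E>\<in>E. exp_dem W X \<Psi> (superext V X \<E> \<rho>)))"

definition models_par :: "qvar set \<Rightarrow> qvar set \<Rightarrow> sop set \<Rightarrow> qop set \<Rightarrow> qop set \<Rightarrow> bool" where
  "models_par V W E \<Theta> \<Psi> \<longleftrightarrow> (\<forall>X \<rho>. finite X \<and> V \<union> W \<subseteq> X \<and> pdo X \<rho> \<longrightarrow>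
      exp_dem W X \<Theta> \<rho> \<le> (INF \<E>\<in>E. exp_dem W X \<Psi> (superext V X \<E> \<rho>)
          + Re (trace X \<rho>) - Re (trace X (superext V X \<E> \<rho>))))"

definition refines_T :: "qvar set \<Rightarrow> sop set \<Rightarrow> sop set \<Rightarrow> bool" where
  "refines_T V E F \<longleftrightarrow> (\<forall>W \<Theta> \<Psi>. finite W \<and> \<Theta> \<subseteq> Collect (effect W) \<and> \<Psi> \<subseteq> Collect (effect W)
      \<longrightarrow> models_tot V W E \<Theta> \<Psi> \<longrightarrow> models_tot V W F \<Theta> \<Psi>)"

definition refines_P :: "qvar set \<Rightarrow> sop set \<Rightarrow> sop set \<Rightarrow> bool" where
  "refines_P V E F \<longleftrightarrow> (\<forall>W \<Theta> \<Psi>. finite W \<and> \<Theta> \<subseteq> Collect (effect W) \<and> \<Psi> \<subseteq> Collect (effect W)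
      \<longrightarrow> models_par V W E \<Theta> \<Psi> \<longrightarrow> models_par V W F \<Theta> \<Psi>)"

definition sadj_set :: "qvar set \<Rightarrow> qvar set \<Rightarrow> sop set \<Rightarrow> qop set \<Rightarrow> qop set" where
  "sadj_set V X E \<Psi> = {sadj X (superext V X \<E>) N | \<E> N. \<E> \<in> E \<and> N \<in> \<Psi>}"

definition compl_set :: "qvar set \<Rightarrow> qop set \<Rightarrow> qop set" where
  "compl_set X \<Theta> = (\<lambda>M. minus_op (ident X) M) ` \<Theta>"

text \<open>Maximally entangled state \<Omega>_{V,V'}: the i-th basis state of H_V is identified
  with the i-th basis state of H_{V'} via the order-preserving bijection V \<rightarrow> V'.\<close>
definition pairvar :: "qvar set \<Rightarrow> qvar set \<Rightarrow> qvar \<Rightarrow> qvar" where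
  "pairvar V V' q = sorted_list_of_set V' ! (LEAST i. sorted_list_of_set V ! i = q)"

definition omega_vec :: "qvar set \<Rightarrow> qvar set \<Rightarrow> bst \<Rightarrow> complex" where
  "omega_vec V V' s = (if s \<in> basis (V \<union> V') \<and> (\<forall>q\<in>V. s q = s (pairvar V V' q))
      then 1 / sqrt (2 ^ card V) else 0)"

definition Omega :: "qvar set \<Rightarrow> qvar set \<Rightarrow> qop" where
  "Omega V V' = (\<lambda>s t. omega_vec V V' s * cnj (omega_vec V V' t))"

end

theory Submission
  imports Defs
begin

lemma basis_eq_img: "basis V = (\<lambda>S q. q \<in> S) ` Pow V"
proof
  show "basis V \<subseteq> (\<lambda>S q. q \<in> S) ` Pow V"
  proof
    fix s assume "s \<in> basis V"
    hence "{q. s q} \<in> Pow V" by (auto simp: basis_def)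
    moreover have "s = (\<lambda>q. q \<in> {q. s q})" by auto
    ultimately show "s \<in> (\<lambda>S q. q \<in> S) ` Pow V" by blast
  qed
  show "(\<lambda>S q. q \<in> S) ` Pow V \<subseteq> basis V" by (auto simp: basis_def)
qed

lemma basis_finite[simp]: "finite V \<Longrightarrow> finite (basis V)"
  by (simp add: basis_eq_img)

lemma card_basis: "finite V \<Longrightarrow> card (basis V) = 2 ^ card V"
proof -
  assume f: "finite V"
  have "inj_on (\<lambda>S q. q \<in> S) (Pow V)"
    by (rule inj_onI) (metis Collect_mem_eq)
  thus ?thesis using f by (simp add: basis_eq_img card_image card_Pow)
qed

lemma restr_basis[simp]: "restr V s \<in> basis V"
  by (simp add: restr_def basis_def)

lemma restr_id[simp]: "s \<in> basis V \<Longrightarrow> restr V s = s"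
  by (auto simp: restr_def basis_def)

lemma merge_basis: "i \<in> basis V \<Longrightarrow> a \<in> basis Y \<Longrightarrow> merge V i a \<in> basis (V \<union> Y)"
  by (auto simp: merge_def basis_def)

lemma merge_basisX: "V \<subseteq> X \<Longrightarrow> i \<in> basis V \<Longrightarrow> a \<in> basis X \<Longrightarrow> merge V i a \<in> basis X"
  by (auto simp: merge_def basis_def)

lemma merge_basisO: "V \<subseteq> X \<Longrightarrow> i \<in> basis V \<Longrightarrow> a \<in> basis (X - V) \<Longrightarrow> merge V i a \<in> basis X"
  by (auto simp: merge_def basis_def)

lemma restr_merge1[simp]: "i \<in> basis V \<Longrightarrow> restr V (merge V i a) = i"
  by (auto simp: restr_def merge_def basis_def)

lemma restr_merge1'[simp]: "restr V (merge V i a) = restr V i"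
  by (auto simp: restr_def merge_def)

lemma restr_merge2: "V \<inter> Y = {} \<Longrightarrow> restr Y (merge V i a) = restr Y a"
  by (auto simp: restr_def merge_def)

lemma merge_restr: "s \<in> basis X \<Longrightarrow> merge V (restr V s) (restr (X - V) s) = s"
  by (auto simp: restr_def merge_def basis_def)

lemma merge_restr_self[simp]: "merge V (restr V s) s = s"
  by (auto simp: restr_def merge_def)

lemma merge_outer: "s \<in> basis X \<Longrightarrow> merge V i (restr (X - V) s) = merge V i s"
  by (auto simp: restr_def merge_def basis_def)

lemma merge_merge[simp]: "merge V i (merge V j a) = merge V i a"
  by (auto simp: merge_def)

lemma split_sum:
  assumes "finite X" "V \<subseteq> X"
  shows "(\<Sum>s\<in>basis X. f s) = (\<Sum>i\<in>basis V. \<Sum>a\<in>basis (X - V). f (merge V i a))"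
proof -
  have fin: "finite V" "finite (X - V)" using assms finite_subset by auto
  have bij: "bij_betw (\<lambda>(i, a). merge V i a) (basis V \<times> basis (X - V)) (basis X)"
  proof (rule bij_betw_byWitness[where f' = "\<lambda>s. (restr V s, restr (X - V) s)"])
    show "\<forall>x\<in>basis V \<times> basis (X - V). (restr V (case x of (i, a) \<Rightarrow> merge V i a),
        restr (X - V) (case x of (i, a) \<Rightarrow> merge V i a)) = x"
      by (auto simp: restr_merge2)
    show "\<forall>y\<in>basis X. (case (restr V y, restr (X - V) y) of (i, a) \<Rightarrow> merge V i a) = y"
      by (auto simp: merge_restr)
    show "(\<lambda>(i, a). merge V i a) ` (basis V \<times> basis (X - V)) \<subseteq> basis X"
      using assms by (auto intro: merge_basisO)
    show "(\<lambda>s. (restr V s, restr (X - V) s)) ` basis X \<subseteq> basis V \<times> basis (X - V)" by auto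
  qed
  have "(\<Sum>s\<in>basis X. f s) = (\<Sum>p\<in>basis V \<times> basis (X - V). f (case p of (i, a) \<Rightarrow> merge V i a))"
    using sum.reindex_bij_betw[OF bij, of f] by simp
  also have "\<dots> = (\<Sum>i\<in>basis V. \<Sum>a\<in>basis (X - V). f (merge V i a))"
    by (simp add: sum.cartesian_product split_def)
  finally show ?thesis .
qed


definition gq :: "'a set \<Rightarrow> ('a \<Rightarrow> 'a \<Rightarrow> complex) \<Rightarrow> ('a \<Rightarrow> complex) \<Rightarrow> complex" where
  "gq B A \<psi> = (\<Sum>s\<in>B. \<Sum>t\<in>B. cnj (\<psi> s) * A s t * \<psi> t)"

definition gpsd :: "'a set \<Rightarrow> ('a \<Rightarrow> 'a \<Rightarrow> complex) \<Rightarrow> bool" where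
  "gpsd B A \<longleftrightarrow> (\<forall>\<psi>. Im (gq B A \<psi>) = 0 \<and> 0 \<le> Re (gq B A \<psi>))"

lemma gq_supp:
  assumes "finite B" "S \<subseteq> B" "\<forall>x\<in>B - S. \<psi> x = 0"
  shows "gq B A \<psi> = gq S A \<psi>"
proof -
  have "gq B A \<psi> = (\<Sum>s\<in>S. \<Sum>t\<in>B. cnj (\<psi> s) * A s t * \<psi> t)"
    unfolding gq_def using assms by (intro sum.mono_neutral_right) auto
  also have "\<dots> = gq S A \<psi>"
    unfolding gq_def using assms by (intro sum.cong refl sum.mono_neutral_right) auto
  finally show ?thesis .
qed

lemma gpsd_subset: "finite B \<Longrightarrow> S \<subseteq> B \<Longrightarrow> gpsd B A \<Longrightarrow> gpsd S A"
  unfolding gpsd_def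
proof (intro allI)
  fix \<psi> assume a: "finite B" "S \<subseteq> B" "\<forall>\<psi>. Im (gq B A \<psi>) = 0 \<and> 0 \<le> Re (gq B A \<psi>)"
  let ?\<phi> = "\<lambda>x. if x \<in> S then \<psi> x else (0::complex)"
  have "gq B A ?\<phi> = gq S A ?\<phi>" using a by (intro gq_supp) auto
  also have "\<dots> = gq S A \<psi>" unfolding gq_def by (intro sum.cong refl) auto
  finally show "Im (gq S A \<psi>) = 0 \<and> 0 \<le> Re (gq S A \<psi>)" using a(3) by metis
qed

lemma gq_two:
  assumes "s \<noteq> t"
  shows "gq {s, t} A \<psi> = cnj (\<psi> s) * A s s * \<psi> s + cnj (\<psi> s) * A s t * \<psi> t
     + cnj (\<psi> t) * A t s * \<psi> s + cnj (\<psi> t) * A t t * \<psi> t"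
  using assms by (simp add: gq_def)

lemma gq_one: "gq {s} A \<psi> = cnj (\<psi> s) * A s s * \<psi> s"
  by (simp add: gq_def)

lemma gpsd_diag:
  assumes "finite B" "gpsd B A" "s \<in> B"
  shows "Im (A s s) = 0" "0 \<le> Re (A s s)"
proof -
  let ?\<psi> = "\<lambda>x. if x = s then 1 else (0::complex)"
  have "gq B A ?\<psi> = gq {s} A ?\<psi>" using assms by (intro gq_supp) auto
  also have "\<dots> = A s s" by (simp add: gq_one)
  finally show "Im (A s s) = 0" "0 \<le> Re (A s s)" using assms(2) unfolding gpsd_def by metis+
qed

lemma ii: "\<i> * z * \<i> = - (z::complex)" by (simp add: complex_eq_iff)

lemma gpsd_herm:
  assumes "finite B" "gpsd B A" "s \<in> B" "t \<in> B"
  shows "A t s = cnj (A s t)"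
proof (cases "s = t")
  case True
  then show ?thesis using gpsd_diag[OF assms(1,2,3)] by (simp add: complex_eq_iff)
next
  case False
  have d1: "Im (A s s) = 0" "Im (A t t) = 0" using gpsd_diag(1)[OF assms(1,2,3)] gpsd_diag(1)[OF assms(1,2,4)] by auto
  let ?\<psi>1 = "\<lambda>x. if x = s then 1 else if x = t then 1 else (0::complex)"
  let ?\<psi>2 = "\<lambda>x. if x = s then 1 else if x = t then \<i> else (0::complex)"
  have "gq B A ?\<psi>1 = gq {s,t} A ?\<psi>1" using assms by (intro gq_supp) auto
  also have "\<dots> = A s s + A s t + A t s + A t t" using False by (simp add: gq_two)
  finally have "Im (A s s + A s t + A t s + A t t) = 0" using assms(2) unfolding gpsd_def by metis
  hence e1: "Im (A s t + A t s) = 0" using d1 by simp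
  have "gq B A ?\<psi>2 = gq {s,t} A ?\<psi>2" using assms by (intro gq_supp) auto
  also have "\<dots> = A s s + A s t * \<i> - \<i> * A t s + A t t" using False by (simp add: gq_two complex_eq_iff)
  finally have "Im (A s s + A s t * \<i> - \<i> * A t s + A t t) = 0" using assms(2) unfolding gpsd_def by metis
  hence e2: "Re (A s t) - Re (A t s) = 0" using d1 by simp
  show ?thesis using e1 e2 by (simp add: complex_eq_iff)
qed

lemma gpsd_zero_row:
  assumes "finite B" "gpsd B A" "s \<in> B" "t \<in> B" "A s s = 0"
  shows "A s t = 0"
proof (rule ccontr)
  assume nz: "A s t \<noteq> 0"
  hence st: "s \<noteq> t" using assms by auto
  have h: "A t s = cnj (A s t)" using gpsd_herm[OF assms(1-4)] by auto
  have dt: "Im (A t t) = 0" "0 \<le> Re (A t t)" using gpsd_diag[OF assms(1,2,4)] by auto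
  define lam where "lam = (Re (A t t) + 1) / (cmod (A s t))\<^sup>2"
  define x where "x = - complex_of_real lam * A s t"
  let ?\<psi> = "\<lambda>y. if y = s then x else if y = t then 1 else (0::complex)"
  have "gq B A ?\<psi> = gq {s,t} A ?\<psi>" using assms by (intro gq_supp) auto
  also have "\<dots> = cnj x * A s t + x * A t s + A t t" using st assms(5) by (simp add: gq_two)
  finally have g: "gq B A ?\<psi> = cnj x * A s t + x * cnj (A s t) + A t t" using h by simp
  have "cnj x * A s t = - complex_of_real (lam * (cmod (A s t))\<^sup>2)"
  proof -
    have "cnj x * A s t = - of_real lam * (A s t * cnj (A s t))" unfolding x_def by (simp add: mult.commute)
    also have "A s t * cnj (A s t) = of_real ((cmod (A s t))\<^sup>2)" by (rule complex_norm_square[symmetric])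
    finally show ?thesis by simp
  qed
  moreover have "lam * (cmod (A s t))\<^sup>2 = Re (A t t) + 1" unfolding lam_def using nz by simp
  ultimately have "Re (gq B A ?\<psi>) = - 2 * (Re (A t t) + 1) + Re (A t t)"
    unfolding g by (simp add: complex_eq_iff)
  moreover have "0 \<le> Re (gq B A ?\<psi>)" using assms(2) unfolding gpsd_def by blast
  ultimately have "0 \<le> - 2 * (Re (A t t) + 1) + Re (A t t)" by simp
  thus False using dt by (simp add: algebra_simps)
qed


lemma sum_delta_mult: "finite B \<Longrightarrow> s0 \<in> B \<Longrightarrow> (\<Sum>t\<in>B. f t * (if t = s0 then c else 0)) = f s0 * (c::complex)"
  by (simp add: if_distrib[of "\<lambda>z. f _ * z"] sum.delta cong: if_cong)

lemma sum_delta_mult': "finite B \<Longrightarrow> s0 \<in> B \<Longrightarrow> (\<Sum>t\<in>B. (if t = s0 then c else 0) * f t) = (c::complex) * f s0"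
  using sum_delta_mult[of B s0 f c] by (simp add: mult.commute)

lemma gq_shift:
  assumes "finite B" "s0 \<in> B"
  shows "gq B A (\<lambda>x. \<psi> x + (if x = s0 then c else 0)) = gq B A \<psi>
     + c * (\<Sum>s\<in>B. cnj (\<psi> s) * A s s0) + cnj c * (\<Sum>t\<in>B. A s0 t * \<psi> t) + cnj c * A s0 s0 * c"
proof -
  define d where "d = (\<lambda>x. if x = s0 then c else (0::complex))"
  have e: "cnj (\<psi> s + d s) * A s t * (\<psi> t + d t) = cnj (\<psi> s) * A s t * \<psi> t
     + (cnj (\<psi> s) * A s t) * d t + cnj (d s) * (A s t * \<psi> t) + cnj (d s) * (A s t * d t)" for s t
    by (simp add: algebra_simps)
  have cd: "cnj (d s) = (if s = s0 then cnj c else 0)" for s by (simp add: d_def)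
  have "gq B A (\<lambda>x. \<psi> x + d x) = gq B A \<psi> + (\<Sum>s\<in>B. \<Sum>t\<in>B. (cnj (\<psi> s) * A s t) * d t)
     + (\<Sum>s\<in>B. \<Sum>t\<in>B. cnj (d s) * (A s t * \<psi> t)) + (\<Sum>s\<in>B. \<Sum>t\<in>B. cnj (d s) * (A s t * d t))"
    unfolding gq_def e by (simp add: sum.distrib)
  also have "(\<Sum>s\<in>B. \<Sum>t\<in>B. (cnj (\<psi> s) * A s t) * d t) = c * (\<Sum>s\<in>B. cnj (\<psi> s) * A s s0)"
    unfolding d_def using assms by (simp add: sum_delta_mult sum_distrib_left mult.commute[of c])
  also have "(\<Sum>s\<in>B. \<Sum>t\<in>B. cnj (d s) * (A s t * \<psi> t)) = cnj c * (\<Sum>t\<in>B. A s0 t * \<psi> t)"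
    unfolding cd using assms by (simp add: sum_delta_mult' sum_distrib_left[symmetric])
  also have "(\<Sum>s\<in>B. \<Sum>t\<in>B. cnj (d s) * (A s t * d t)) = cnj c * A s0 s0 * c"
  proof -
    have "(\<Sum>t\<in>B. cnj (d s) * (A s t * d t)) = cnj (d s) * (A s s0 * c)" for s
      unfolding sum_distrib_left[symmetric] d_def using sum_delta_mult[OF assms, of "A s" c] by simp
    hence "(\<Sum>s\<in>B. \<Sum>t\<in>B. cnj (d s) * (A s t * d t)) = (\<Sum>s\<in>B. cnj (d s) * (A s s0 * c))" by simp
    also have "\<dots> = cnj c * (A s0 s0 * c)" unfolding cd using sum_delta_mult'[OF assms] by simp
    finally show ?thesis by (simp add: mult.assoc)
  qed
  finally show ?thesis unfolding d_def .
qed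

lemma gq_diff: "gq B (\<lambda>x y. A x y - C x y) \<psi> = gq B A \<psi> - gq B C \<psi>"
  unfolding gq_def by (simp add: algebra_simps sum_subtractf)

lemma gq_rank1: "gq B (\<lambda>x y. m x * cnj (m y)) \<psi> = cnj (\<Sum>t\<in>B. cnj (m t) * \<psi> t) * (\<Sum>t\<in>B. cnj (m t) * \<psi> t)"
proof -
  have "gq B (\<lambda>x y. m x * cnj (m y)) \<psi> = (\<Sum>s\<in>B. cnj (\<psi> s) * m s) * (\<Sum>t\<in>B. cnj (m t) * \<psi> t)"
    unfolding gq_def sum_product by (intro sum.cong refl) (simp add: mult.assoc)
  also have "(\<Sum>s\<in>B. cnj (\<psi> s) * m s) = cnj (\<Sum>t\<in>B. cnj (m t) * \<psi> t)"
    by (simp add: mult.commute)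
  finally show ?thesis .
qed


lemma gpsd_schur:
  assumes fin: "finite B" and ps: "gpsd B A" and s0: "s0 \<in> B" and a: "A s0 s0 = complex_of_real a" "a > 0"
  defines "m0 \<equiv> \<lambda>x. A x s0 / complex_of_real (sqrt a)"
  shows "gpsd B (\<lambda>x y. A x y - m0 x * cnj (m0 y))"
  unfolding gpsd_def
proof
  fix \<psi>
  define x where "x = (\<Sum>t\<in>B. A s0 t * \<psi> t)"
  define c where "c = - x / complex_of_real a"
  have herm: "A s s0 = cnj (A s0 s)" if "s \<in> B" for s using gpsd_herm[OF fin ps s0 that] .
  have sq: "complex_of_real (sqrt a) * complex_of_real (sqrt a) = complex_of_real a"
    using a(2) by (simp flip: of_real_mult)
  have y: "(\<Sum>t\<in>B. cnj (m0 t) * \<psi> t) = x / complex_of_real (sqrt a)"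
    unfolding x_def m0_def sum_divide_distrib
    by (intro sum.cong refl) (simp add: herm)
  have r1: "gq B (\<lambda>x y. m0 x * cnj (m0 y)) \<psi> = cnj x * x / complex_of_real a"
    unfolding gq_rank1 y using sq by (simp add: field_simps)
  have cx: "(\<Sum>s\<in>B. cnj (\<psi> s) * A s s0) = cnj x"
    unfolding x_def by (simp add: herm mult.commute)
  have "gq B A (\<lambda>z. \<psi> z + (if z = s0 then c else 0)) = gq B A \<psi> + c * cnj x + cnj c * x + cnj c * complex_of_real a * c"
    using gq_shift[OF fin s0, of A \<psi> c] cx a(1) x_def by simp
  also have "\<dots> = gq B A \<psi> - cnj x * x / complex_of_real a"
    unfolding c_def using a(2) by (simp add: field_simps)
  also have "\<dots> = gq B (\<lambda>x y. A x y - m0 x * cnj (m0 y)) \<psi>"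
    by (simp add: gq_diff r1)
  finally have "gq B (\<lambda>x y. A x y - m0 x * cnj (m0 y)) \<psi> = gq B A (\<lambda>z. \<psi> z + (if z = s0 then c else 0))" by simp
  thus "Im (gq B (\<lambda>x y. A x y - m0 x * cnj (m0 y)) \<psi>) = 0 \<and> 0 \<le> Re (gq B (\<lambda>x y. A x y - m0 x * cnj (m0 y)) \<psi>)"
    using ps unfolding gpsd_def by metis
qed

theorem gpsd_factor:
  assumes "finite B" "gpsd B A"
  shows "\<exists>(n::nat) f. \<forall>s\<in>B. \<forall>t\<in>B. A s t = (\<Sum>r<n. f r s * cnj (f r t))"
  using assms
proof (induction B arbitrary: A rule: finite_induct)
  case empty
  then show ?case by auto
next
  case (insert s0 B')
  let ?B = "insert s0 B'"
  have finB: "finite ?B" using insert by simp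
  have s0B: "s0 \<in> ?B" by simp
  show ?case
  proof (cases "A s0 s0 = 0")
    case True
    have "gpsd B' A" using gpsd_subset[OF finB _ insert.prems] by auto
    from insert.IH[OF this] obtain n :: nat and f where f: "\<forall>s\<in>B'. \<forall>t\<in>B'. A s t = (\<Sum>r<n. f r s * cnj (f r t))"
      by blast
    define f' where "f' = (\<lambda>r x. if x = s0 then 0 else f r x)"
    have row: "A s0 t = 0" if "t \<in> ?B" for t using gpsd_zero_row[OF finB insert.prems s0B that True] .
    have col: "A t s0 = 0" if "t \<in> ?B" for t
      using gpsd_herm[OF finB insert.prems s0B that] row[OF that] by simp
    have "\<forall>s\<in>?B. \<forall>t\<in>?B. A s t = (\<Sum>r<n. f' r s * cnj (f' r t))"
    proof (intro ballI)
      fix s t assume st: "s \<in> ?B" "t \<in> ?B"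
      show "A s t = (\<Sum>r<n. f' r s * cnj (f' r t))"
      proof (cases "s = s0 \<or> t = s0")
        case True
        then show ?thesis using row col st by (auto simp: f'_def)
      next
        case False
        then show ?thesis using f st by (simp add: f'_def)
      qed
    qed
    then show ?thesis by blast
  next
    case False
    have d: "Im (A s0 s0) = 0" "0 \<le> Re (A s0 s0)" using gpsd_diag[OF finB insert.prems s0B] by auto
    define a where "a = Re (A s0 s0)"
    have aeq: "A s0 s0 = complex_of_real a" using d unfolding a_def by (simp add: complex_eq_iff)
    have "a \<noteq> 0" using False aeq by auto
    hence apos: "a > 0" using d unfolding a_def by linarith
    define m0 where "m0 = (\<lambda>x. A x s0 / complex_of_real (sqrt a))"
    define A' where "A' = (\<lambda>x y. A x y - m0 x * cnj (m0 y))"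
    have psA': "gpsd ?B A'" unfolding A'_def m0_def using gpsd_schur[OF finB insert.prems s0B aeq apos] .
    have sq: "complex_of_real (sqrt a) * complex_of_real (sqrt a) = complex_of_real a"
      using apos by (simp flip: of_real_mult)
    have A'00: "A' s0 s0 = 0"
      unfolding A'_def m0_def aeq using apos sq by (simp add: field_simps)
    have row: "A' s0 t = 0" if "t \<in> ?B" for t using gpsd_zero_row[OF finB psA' s0B that A'00] .
    have col: "A' t s0 = 0" if "t \<in> ?B" for t
      using gpsd_herm[OF finB psA' s0B that] row[OF that] by simp
    have "gpsd B' A'" using gpsd_subset[OF finB _ psA'] by auto
    from insert.IH[OF this] obtain n :: nat and f where f: "\<forall>s\<in>B'. \<forall>t\<in>B'. A' s t = (\<Sum>r<n. f r s * cnj (f r t))"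
      by blast
    define f' where "f' = (\<lambda>r x. if r < n then (if x = s0 then 0 else f r x) else m0 x)"
    have "\<forall>s\<in>?B. \<forall>t\<in>?B. A s t = (\<Sum>r<Suc n. f' r s * cnj (f' r t))"
    proof (intro ballI)
      fix s t assume st: "s \<in> ?B" "t \<in> ?B"
      have eA: "A s t = A' s t + m0 s * cnj (m0 t)" unfolding A'_def by simp
      have "(\<Sum>r<Suc n. f' r s * cnj (f' r t)) = (\<Sum>r<n. f' r s * cnj (f' r t)) + m0 s * cnj (m0 t)"
        by (simp add: f'_def)
      moreover have "A' s t = (\<Sum>r<n. f' r s * cnj (f' r t))"
      proof (cases "s = s0 \<or> t = s0")
        case True
        then show ?thesis using row col st by (auto simp: f'_def)
      next
        case False
        then show ?thesis using f st by (simp add: f'_def)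
      qed
      ultimately show "A s t = (\<Sum>r<Suc n. f' r s * cnj (f' r t))" using eA by simp
    qed
    then show ?thesis by blast
  qed
qed


lemma qform_gq: "qform X A \<psi> = gq (basis X) A \<psi>"
  by (simp add: qform_def gq_def)

lemma psd_iff: "psd X A \<longleftrightarrow> op_on X A \<and> gpsd (basis X) A"
  by (simp add: psd_def gpsd_def qform_gq)

lemma op_onD: "op_on X A \<Longrightarrow> s \<notin> basis X \<or> t \<notin> basis X \<Longrightarrow> A s t = 0"
  by (simp add: op_on_def)

lemma psd_factor:
  assumes "finite X" "psd X A"
  shows "\<exists>(n::nat) f. \<forall>s\<in>basis X. \<forall>t\<in>basis X. A s t = (\<Sum>r<n. f r s * cnj (f r t))"
  using gpsd_factor[of "basis X" A] assms by (simp add: psd_iff)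

lemma trace_mult_eq: "trace X (mult X A B) = (\<Sum>s\<in>basis X. \<Sum>u\<in>basis X. A s u * B u s)"
  by (simp add: trace_def mult_def)

lemma trace_mult_comm: "trace X (mult X A B) = trace X (mult X B A)"
  unfolding trace_mult_eq by (subst sum.swap) (simp add: mult.commute)

lemma psd_herm: assumes "finite X" "psd X A" shows "A t s = cnj (A s t)"
proof (cases "s \<in> basis X \<and> t \<in> basis X")
  case True
  then show ?thesis using gpsd_herm[of "basis X" A s t] assms by (simp add: psd_iff)
next
  case False
  then show ?thesis using assms op_onD[of X A] by (auto simp: psd_iff)
qed

lemma psd_trace: assumes "finite X" "psd X A" shows "Im (trace X A) = 0" "0 \<le> Re (trace X A)"
proof -
  have d: "Im (A s s) = 0 \<and> 0 \<le> Re (A s s)" if "s \<in> basis X" for s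
    using gpsd_diag[of "basis X" A s] assms that by (simp add: psd_iff)
  show "Im (trace X A) = 0" unfolding trace_def Im_sum using d by simp
  show "0 \<le> Re (trace X A)" unfolding trace_def Re_sum using d by (simp add: sum_nonneg)
qed

lemma trace_psd_psd:
  assumes fin: "finite X" and A: "psd X A" and B: "psd X B"
  shows "Im (trace X (mult X A B)) = 0" "0 \<le> Re (trace X (mult X A B))"
proof -
  obtain n :: nat and f where f: "\<forall>s\<in>basis X. \<forall>t\<in>basis X. A s t = (\<Sum>r<n. f r s * cnj (f r t))"
    using psd_factor[OF fin A] by blast
  have "trace X (mult X A B) = (\<Sum>s\<in>basis X. \<Sum>u\<in>basis X. \<Sum>r<n. f r s * cnj (f r u) * B u s)"
    unfolding trace_mult_eq using f by (simp add: sum_distrib_right)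
  also have "\<dots> = (\<Sum>s\<in>basis X. \<Sum>r<n. \<Sum>u\<in>basis X. f r s * cnj (f r u) * B u s)"
    by (rule sum.cong[OF refl], rule sum.swap)
  also have "\<dots> = (\<Sum>r<n. \<Sum>s\<in>basis X. \<Sum>u\<in>basis X. f r s * cnj (f r u) * B u s)"
    by (rule sum.swap)
  also have "\<dots> = (\<Sum>r<n. \<Sum>u\<in>basis X. \<Sum>s\<in>basis X. f r s * cnj (f r u) * B u s)"
    by (rule sum.cong[OF refl], rule sum.swap)
  also have "\<dots> = (\<Sum>r<n. \<Sum>u\<in>basis X. \<Sum>s\<in>basis X. cnj (f r u) * B u s * f r s)"
    by (simp add: mult.commute mult.left_commute)
  also have "\<dots> = (\<Sum>r<n. qform X B (f r))" by (simp add: qform_def)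
  finally have e: "trace X (mult X A B) = (\<Sum>r<n. qform X B (f r))" .
  have q: "Im (qform X B \<psi>) = 0 \<and> 0 \<le> Re (qform X B \<psi>)" for \<psi> using B by (simp add: psd_def)
  show "Im (trace X (mult X A B)) = 0" unfolding e Im_sum using q by simp
  show "0 \<le> Re (trace X (mult X A B))" unfolding e Re_sum using q by (simp add: sum_nonneg)
qed


lemma op_on_scale: "op_on V A \<Longrightarrow> op_on V (\<lambda>s t. c * A s t)" by (simp add: op_on_def)
lemma op_on_add: "op_on V A \<Longrightarrow> op_on V B \<Longrightarrow> op_on V (\<lambda>s t. A s t + B s t)" by (simp add: op_on_def)
lemma op_on_sum: "(\<And>k. k \<in> K \<Longrightarrow> op_on V (B k)) \<Longrightarrow> op_on V (\<lambda>s t. \<Sum>k\<in>K. c k * B k s t)"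
  by (simp add: op_on_def)
lemma op_on_ebasis[simp]: "op_on V (ebasis V i j)" by (auto simp: op_on_def ebasis_def)
lemma op_on_zero[simp]: "op_on V (\<lambda>s t. 0)" by (simp add: op_on_def)

lemma DProgD:
  assumes "e \<in> DProg V"
  shows "\<And>A. \<not> op_on V A \<Longrightarrow> e A = zero_op"
    "\<And>A. op_on V A \<Longrightarrow> op_on V (e A)"
    "\<And>A B. op_on V A \<Longrightarrow> op_on V B \<Longrightarrow> e (\<lambda>s t. A s t + B s t) = (\<lambda>s t. e A s t + e B s t)"
    "\<And>A c. op_on V A \<Longrightarrow> e (\<lambda>s t. c * A s t) = (\<lambda>s t. c * e A s t)"
    "\<And>X \<rho>. finite X \<Longrightarrow> V \<subseteq> X \<Longrightarrow> psd X \<rho> \<Longrightarrow> psd X (superext V X e \<rho>)"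
    "\<And>\<rho>. psd V \<rho> \<Longrightarrow> Re (trace V (e \<rho>)) \<le> Re (trace V \<rho>)"
  using assms by (simp_all add: DProg_def)

lemma DProg_zero: assumes "e \<in> DProg V" shows "e (\<lambda>s t. 0) = (\<lambda>s t. 0)"
proof -
  have "e (\<lambda>s t. 0 * zero_op s t) = (\<lambda>s t. 0 * e zero_op s t)"
    using DProgD(4)[OF assms, of zero_op 0] by (simp add: zero_op_def)
  thus ?thesis by (simp add: zero_op_def)
qed

lemma DProg_lin_sum:
  assumes e: "e \<in> DProg V" and K: "finite K" and B: "\<And>k. k \<in> K \<Longrightarrow> op_on V (B k)"
  shows "e (\<lambda>s t. \<Sum>k\<in>K. c k * B k s t) = (\<lambda>s t. \<Sum>k\<in>K. c k * e (B k) s t)"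
  using K B
proof (induction K rule: finite_induct)
  case empty
  then show ?case using DProg_zero[OF e] by simp
next
  case (insert x F)
  have o1: "op_on V (\<lambda>s t. c x * B x s t)" using insert by (intro op_on_scale) auto
  have o2: "op_on V (\<lambda>s t. \<Sum>k\<in>F. c k * B k s t)" using insert by (intro op_on_sum) auto
  have "e (\<lambda>s t. \<Sum>k\<in>insert x F. c k * B k s t) = e (\<lambda>s t. c x * B x s t + (\<Sum>k\<in>F. c k * B k s t))"
    using insert by simp
  also have "\<dots> = (\<lambda>s t. e (\<lambda>s t. c x * B x s t) s t + e (\<lambda>s t. \<Sum>k\<in>F. c k * B k s t) s t)"
    using DProgD(3)[OF e o1 o2] .
  also have "\<dots> = (\<lambda>s t. c x * e (B x) s t + (\<Sum>k\<in>F. c k * e (B k) s t))"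
    using DProgD(4)[OF e, of "B x" "c x"] insert by simp
  also have "\<dots> = (\<lambda>s t. \<Sum>k\<in>insert x F. c k * e (B k) s t)" using insert by simp
  finally show ?case .
qed

lemma op_expand:
  assumes "finite V" "op_on V A"
  shows "A = (\<lambda>s t. \<Sum>p\<in>basis V \<times> basis V. A (fst p) (snd p) * ebasis V (fst p) (snd p) s t)"
proof (intro ext)
  fix s t
  show "A s t = (\<Sum>p\<in>basis V \<times> basis V. A (fst p) (snd p) * ebasis V (fst p) (snd p) s t)"
  proof (cases "s \<in> basis V \<and> t \<in> basis V")
    case True
    have "(\<Sum>p\<in>basis V \<times> basis V. A (fst p) (snd p) * ebasis V (fst p) (snd p) s t)
        = (\<Sum>p\<in>basis V \<times> basis V. if p = (s, t) then A s t else 0)"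
      by (intro sum.cong refl) (auto simp: ebasis_def)
    also have "\<dots> = A s t" using True assms by simp
    finally show ?thesis by simp
  next
    case False
    then have "A s t = 0" using assms by (auto simp: op_on_def)
    moreover have "ebasis V (fst p) (snd p) s t = 0" for p using False by (auto simp: ebasis_def)
    ultimately show ?thesis by simp
  qed
qed

lemma e_expand:
  assumes V: "finite V" and e: "e \<in> DProg V" and A: "op_on V A"
  shows "e A = (\<lambda>l k. \<Sum>i\<in>basis V. \<Sum>j\<in>basis V. A i j * e (ebasis V i j) l k)"
proof -
  have "e A = e (\<lambda>s t. \<Sum>p\<in>basis V \<times> basis V. A (fst p) (snd p) * ebasis V (fst p) (snd p) s t)"
    using op_expand[OF V A] by simp
  also have "\<dots> = (\<lambda>s t. \<Sum>p\<in>basis V \<times> basis V. A (fst p) (snd p) * e (ebasis V (fst p) (snd p)) s t)"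
    using DProg_lin_sum[OF e, of "basis V \<times> basis V" "\<lambda>p. ebasis V (fst p) (snd p)" "\<lambda>p. A (fst p) (snd p)"] V
    by simp
  also have "\<dots> = (\<lambda>l k. \<Sum>i\<in>basis V. \<Sum>j\<in>basis V. A i j * e (ebasis V i j) l k)"
    by (simp add: sum.cartesian_product split_def)
  finally show ?thesis .
qed

lemma superext_expand:
  assumes V: "finite V" and e: "e \<in> DProg V"
  shows "superext V X e \<rho> s t = (if s \<in> basis X \<and> t \<in> basis X then
     (\<Sum>i\<in>basis V. \<Sum>j\<in>basis V. \<rho> (merge V i s) (merge V j t) * e (ebasis V i j) (restr V s) (restr V t)) else 0)"
proof -
  define blk where "blk = (\<lambda>s' t'. if s' \<in> basis V \<and> t' \<in> basis V then \<rho> (merge V s' s) (merge V t' t) else 0)"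
  have o: "op_on V blk" by (simp add: blk_def op_on_def)
  have "superext V X e \<rho> s t = (if s \<in> basis X \<and> t \<in> basis X then e blk (restr V s) (restr V t) else 0)"
    by (simp add: superext_def blk_def)
  also have "\<dots> = (if s \<in> basis X \<and> t \<in> basis X then
     (\<Sum>i\<in>basis V. \<Sum>j\<in>basis V. \<rho> (merge V i s) (merge V j t) * e (ebasis V i j) (restr V s) (restr V t)) else 0)"
    unfolding e_expand[OF V e o] by (simp add: blk_def)
  finally show ?thesis .
qed

lemma op_on_superext[simp]: "op_on X (superext V X e \<rho>)"
  by (simp add: op_on_def superext_def)

lemma sum_invol:
  assumes X: "finite X" and VX: "V \<subseteq> X"
  shows "(\<Sum>s\<in>basis X. \<Sum>i\<in>basis V. g s i) = (\<Sum>s\<in>basis X. \<Sum>i\<in>basis V. g (merge V i s) (restr V s))"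
proof -
  have "(\<Sum>s\<in>basis X. \<Sum>i\<in>basis V. g s i) = (\<Sum>p\<in>basis X \<times> basis V. g (fst p) (snd p))"
    by (simp add: sum.cartesian_product split_def)
  also have "\<dots> = (\<Sum>p\<in>basis X \<times> basis V. g (merge V (snd p) (fst p)) (restr V (fst p)))"
    apply (rule sum.reindex_bij_witness[where i = "\<lambda>p. (merge V (snd p) (fst p), restr V (fst p))"
        and j = "\<lambda>p. (merge V (snd p) (fst p), restr V (fst p))"])
    using VX by (auto intro: merge_basisX)
  also have "\<dots> = (\<Sum>s\<in>basis X. \<Sum>i\<in>basis V. g (merge V i s) (restr V s))"
    by (simp add: sum.cartesian_product split_def)
  finally show ?thesis .
qed


definition dual :: "qvar set \<Rightarrow> qvar set \<Rightarrow> sop \<Rightarrow> qop \<Rightarrow> qop" where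
  "dual V X e B = (\<lambda>t' s'. if t' \<in> basis X \<and> s' \<in> basis X then
     (\<Sum>l\<in>basis V. \<Sum>k\<in>basis V. B (merge V k t') (merge V l s') * e (ebasis V (restr V s') (restr V t')) l k) else 0)"

lemma op_on_dual[simp]: "op_on X (dual V X e B)" by (simp add: op_on_def dual_def)

lemma dual_trace:
  assumes X: "finite X" and VX: "V \<subseteq> X" and e: "e \<in> DProg V"
  shows "trace X (mult X B (superext V X e \<rho>)) = trace X (mult X (dual V X e B) \<rho>)"
proof -
  have V: "finite V" using X VX finite_subset by auto
  define C where "C = (\<lambda>i j l k. e (ebasis V i j) l k)"
  have "trace X (mult X B (superext V X e \<rho>)) =
     (\<Sum>t\<in>basis X. \<Sum>s\<in>basis X. \<Sum>i\<in>basis V. \<Sum>j\<in>basis V. B t s * \<rho> (merge V i s) (merge V j t) * C i j (restr V s) (restr V t))"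
    unfolding trace_mult_eq superext_expand[OF V e] C_def
    by (simp add: sum_distrib_left mult.assoc)
  also have "\<dots> = (\<Sum>t\<in>basis X. \<Sum>s\<in>basis X. \<Sum>i\<in>basis V. \<Sum>j\<in>basis V. B t (merge V i s) * \<rho> s (merge V j t) * C (restr V s) j i (restr V t))"
  proof (rule sum.cong[OF refl])
    fix t assume t: "t \<in> basis X"
    have "(\<Sum>s\<in>basis X. \<Sum>i\<in>basis V. \<Sum>j\<in>basis V. B t s * \<rho> (merge V i s) (merge V j t) * C i j (restr V s) (restr V t))
       = (\<Sum>s\<in>basis X. \<Sum>i\<in>basis V. \<Sum>j\<in>basis V. B t (merge V i s) * \<rho> (merge V (restr V s) (merge V i s)) (merge V j t) * C (restr V s) j (restr V (merge V i s)) (restr V t))"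
      by (rule sum_invol[OF X VX])
    also have "\<dots> = (\<Sum>s\<in>basis X. \<Sum>i\<in>basis V. \<Sum>j\<in>basis V. B t (merge V i s) * \<rho> s (merge V j t) * C (restr V s) j i (restr V t))"
      by (intro sum.cong refl) simp
    finally show "(\<Sum>s\<in>basis X. \<Sum>i\<in>basis V. \<Sum>j\<in>basis V. B t s * \<rho> (merge V i s) (merge V j t) * C i j (restr V s) (restr V t))
       = (\<Sum>s\<in>basis X. \<Sum>i\<in>basis V. \<Sum>j\<in>basis V. B t (merge V i s) * \<rho> s (merge V j t) * C (restr V s) j i (restr V t))" .
  qed
  also have "\<dots> = (\<Sum>s\<in>basis X. \<Sum>i\<in>basis V. \<Sum>t\<in>basis X. \<Sum>j\<in>basis V. B t (merge V i s) * \<rho> s (merge V j t) * C (restr V s) j i (restr V t))"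
    apply (subst sum.swap[where A="basis X" and B="basis X"])
    apply (rule sum.cong[OF refl])
    by (rule sum.swap)
  also have "\<dots> = (\<Sum>s\<in>basis X. \<Sum>i\<in>basis V. \<Sum>t\<in>basis X. \<Sum>j\<in>basis V. B (merge V j t) (merge V i s) * \<rho> s t * C (restr V s) (restr V t) i j)"
  proof (rule sum.cong[OF refl], rule sum.cong[OF refl])
    fix s i
    have "(\<Sum>t\<in>basis X. \<Sum>j\<in>basis V. B t (merge V i s) * \<rho> s (merge V j t) * C (restr V s) j i (restr V t))
      = (\<Sum>t\<in>basis X. \<Sum>j\<in>basis V. B (merge V j t) (merge V i s) * \<rho> s (merge V (restr V t) (merge V j t)) * C (restr V s) (restr V t) i (restr V (merge V j t)))"
      by (rule sum_invol[OF X VX])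
    also have "\<dots> = (\<Sum>t\<in>basis X. \<Sum>j\<in>basis V. B (merge V j t) (merge V i s) * \<rho> s t * C (restr V s) (restr V t) i j)"
      by (intro sum.cong refl) simp
    finally show "(\<Sum>t\<in>basis X. \<Sum>j\<in>basis V. B t (merge V i s) * \<rho> s (merge V j t) * C (restr V s) j i (restr V t))
      = (\<Sum>t\<in>basis X. \<Sum>j\<in>basis V. B (merge V j t) (merge V i s) * \<rho> s t * C (restr V s) (restr V t) i j)" .
  qed
  also have "\<dots> = (\<Sum>s\<in>basis X. \<Sum>t\<in>basis X. \<Sum>i\<in>basis V. \<Sum>j\<in>basis V. B (merge V j t) (merge V i s) * \<rho> s t * C (restr V s) (restr V t) i j)"
    by (rule sum.cong[OF refl], rule sum.swap)
  also have "\<dots> = (\<Sum>t\<in>basis X. \<Sum>s\<in>basis X. \<Sum>i\<in>basis V. \<Sum>j\<in>basis V. B (merge V j t) (merge V i s) * \<rho> s t * C (restr V s) (restr V t) i j)"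
    by (rule sum.swap)
  also have "\<dots> = (\<Sum>t\<in>basis X. \<Sum>s\<in>basis X. \<Sum>i\<in>basis V. \<Sum>j\<in>basis V. B (merge V j t) (merge V i s) * C (restr V s) (restr V t) i j * \<rho> s t)"
    by (simp add: mult.commute mult.left_commute)
  also have "\<dots> = trace X (mult X (dual V X e B) \<rho>)"
    unfolding trace_mult_eq dual_def C_def
    by (intro sum.cong refl) (simp add: sum_distrib_right)
  finally show ?thesis .
qed


lemma sadj_dual:
  assumes W: "finite W" and VW: "V \<subseteq> W" and e: "e \<in> DProg V"
  shows "sadj W (superext V W e) N = dual V W e N"
proof (intro ext)
  fix v u
  show "sadj W (superext V W e) N v u = dual V W e N v u"
  proof (cases "v \<in> basis W \<and> u \<in> basis W")
    case True
    define D where "D = dual V W e N"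
    have "sadj W (superext V W e) N v u = trace W (mult W N (superext V W e (ebasis W u v)))"
      using True by (simp add: sadj_def trace_mult_comm)
    also have "\<dots> = trace W (mult W D (ebasis W u v))" unfolding D_def by (rule dual_trace[OF W VW e])
    also have "\<dots> = (\<Sum>a\<in>basis W. \<Sum>b\<in>basis W. D a b * ebasis W u v b a)" by (rule trace_mult_eq)
    also have "\<dots> = (\<Sum>a\<in>basis W. if a = v then D a u else 0)"
    proof (rule sum.cong[OF refl])
      fix a assume a: "a \<in> basis W"
      have "(\<Sum>b\<in>basis W. D a b * ebasis W u v b a) = (\<Sum>b\<in>basis W. if b = u then (if a = v then D a u else 0) else 0)"
        using True by (intro sum.cong refl) (auto simp: ebasis_def)
      also have "\<dots> = (if a = v then D a u else 0)" using True W by simp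
      finally show "(\<Sum>b\<in>basis W. D a b * ebasis W u v b a) = (if a = v then D a u else 0)" .
    qed
    also have "\<dots> = D v u" using True W by simp
    finally show ?thesis unfolding D_def .
  next
    case False
    then show ?thesis by (auto simp: sadj_def dual_def)
  qed
qed

lemma restr_merge_sub: "V \<subseteq> W \<Longrightarrow> restr W (merge V k t) = merge V k (restr W t)"
  by (auto simp: restr_def merge_def)

lemma restr_restr_sub: "V \<subseteq> W \<Longrightarrow> restr V (restr W s) = restr V s"
  by (auto simp: restr_def)

lemma ext_dual:
  assumes VW: "V \<subseteq> W" and WX: "W \<subseteq> X"
  shows "ext W X (dual V W e N) = dual V X e (ext W X N)"
proof (intro ext)
  fix t' s'
  show "ext W X (dual V W e N) t' s' = dual V X e (ext W X N) t' s'"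
  proof (cases "t' \<in> basis X \<and> s' \<in> basis X")
    case bx: True
    show ?thesis
    proof (cases "\<forall>q\<in>X - W. t' q = s' q")
      case True
      have "ext W X (dual V W e N) t' s' = dual V W e N (restr W t') (restr W s')"
        using bx True by (simp add: ext_def)
      also have "\<dots> = (\<Sum>l\<in>basis V. \<Sum>k\<in>basis V. N (merge V k (restr W t')) (merge V l (restr W s')) * e (ebasis V (restr V s') (restr V t')) l k)"
        using VW by (simp add: dual_def restr_restr_sub)
      also have "\<dots> = dual V X e (ext W X N) t' s'"
      proof -
        have "ext W X N (merge V k t') (merge V l s') = N (merge V k (restr W t')) (merge V l (restr W s'))"
          if "k \<in> basis V" "l \<in> basis V" for k l
        proof -
          have "merge V k t' \<in> basis X" "merge V l s' \<in> basis X"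
            using that bx VW WX by (auto intro: merge_basisX)
          moreover have "\<forall>q\<in>X - W. merge V k t' q = merge V l s' q" using True VW by (auto simp: merge_def)
          ultimately show ?thesis by (simp add: ext_def restr_merge_sub[OF VW])
        qed
        thus ?thesis unfolding dual_def using bx by (simp cong: sum.cong)
      qed
      finally show ?thesis .
    next
      case False
      then obtain q where q: "q \<in> X - W" "t' q \<noteq> s' q" by blast
      have z: "ext W X N (merge V k t') (merge V l s') = 0" for k l
        using q VW unfolding ext_def by (auto simp: merge_def)
      have "ext W X (dual V W e N) t' s' = 0" using q unfolding ext_def by auto
      moreover have "dual V X e (ext W X N) t' s' = 0" by (simp add: dual_def z)
      ultimately show ?thesis by simp
    qed
  next
    case False
    then show ?thesis by (auto simp: ext_def dual_def)
  qed
qed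

lemma sadj_ext_trace:
  assumes X: "finite X" and VW: "V \<subseteq> W" and WX: "W \<subseteq> X" and e: "e \<in> DProg V"
  shows "trace X (mult X (ext W X (sadj W (superext V W e) N)) \<rho>) = trace X (mult X (ext W X N) (superext V X e \<rho>))"
proof -
  have W: "finite W" using X WX finite_subset by auto
  show ?thesis
    unfolding sadj_dual[OF W VW e] ext_dual[OF VW WX] dual_trace[OF X _ e, symmetric]
    using VW WX by (simp add: dual_trace[OF X _ e])
qed


definition proj :: "qvar set \<Rightarrow> (bst \<Rightarrow> complex) \<Rightarrow> qop" where
  "proj X \<psi> = (\<lambda>u v. if u \<in> basis X \<and> v \<in> basis X then \<psi> u * cnj (\<psi> v) else 0)"

lemma op_on_proj[simp]: "op_on X (proj X \<psi>)" by (simp add: op_on_def proj_def)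

lemma qform_trace: "qform X A \<psi> = trace X (mult X A (proj X \<psi>))"
  unfolding qform_def trace_mult_eq proj_def
  by (intro sum.cong refl) (simp add: mult.commute mult.left_commute)

lemma gq_cong: "(\<And>s t. s \<in> B \<Longrightarrow> t \<in> B \<Longrightarrow> A s t = A' s t) \<Longrightarrow> gq B A \<psi> = gq B A' \<psi>"
  unfolding gq_def by (intro sum.cong refl) simp

lemma cnj_mult_self: "Im (cnj z * z) = 0 \<and> 0 \<le> Re (cnj z * z)"
  by (simp add: algebra_simps)

lemma psd_proj: "psd X (proj X \<psi>)"
proof -
  have "Im (qform X (proj X \<psi>) \<phi>) = 0 \<and> 0 \<le> Re (qform X (proj X \<psi>) \<phi>)" for \<phi>
  proof -
    define z where "z = (\<Sum>t\<in>basis X. cnj (\<psi> t) * \<phi> t)"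
    have "qform X (proj X \<psi>) \<phi> = gq (basis X) (\<lambda>x y. \<psi> x * cnj (\<psi> y)) \<phi>"
      unfolding qform_gq by (rule gq_cong) (simp add: proj_def)
    also have "\<dots> = cnj z * z" unfolding gq_rank1 z_def ..
    finally show ?thesis using cnj_mult_self[of z] by (simp only:)
  qed
  thus ?thesis by (simp add: psd_def)
qed

lemma trace_proj: assumes "finite X" shows "trace X (proj X \<psi>) = qform X (ident X) \<psi>"
proof -
  have "qform X (ident X) \<psi> = (\<Sum>s\<in>basis X. \<Sum>t\<in>basis X. if t = s then cnj (\<psi> s) * \<psi> s else 0)"
    unfolding qform_def ident_def by (intro sum.cong refl) auto
  also have "\<dots> = (\<Sum>s\<in>basis X. cnj (\<psi> s) * \<psi> s)"
    using assms by (intro sum.cong refl) simp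
  also have "\<dots> = trace X (proj X \<psi>)" unfolding trace_def proj_def by (simp add: mult.commute)
  finally show ?thesis by simp
qed

lemma qform_dual:
  assumes X: "finite X" and VX: "V \<subseteq> X" and e: "e \<in> DProg V"
  shows "qform X (dual V X e N) \<psi> = trace X (mult X N (superext V X e (proj X \<psi>)))"
  unfolding qform_trace dual_trace[OF X VX e] ..

lemma superext_self:
  assumes V: "finite V" and e: "e \<in> DProg V" and P: "op_on V P"
  shows "superext V V e P = e P"
proof (intro ext)
  fix s t
  have blk: "(\<lambda>s' t'. if s' \<in> basis V \<and> t' \<in> basis V then P (merge V s' s) (merge V t' t) else 0) = P"
    if "s \<in> basis V" "t \<in> basis V"
  proof (intro ext)
    fix s' t'
    have m: "merge V s' s = s'" "merge V t' t = t'" if "s' \<in> basis V" "t' \<in> basis V"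
      using that \<open>s \<in> basis V\<close> \<open>t \<in> basis V\<close> by (auto simp: merge_def basis_def)
    show "(if s' \<in> basis V \<and> t' \<in> basis V then P (merge V s' s) (merge V t' t) else 0) = P s' t'"
      using m P by (auto simp: op_on_def)
  qed
  show "superext V V e P s t = e P s t"
  proof (cases "s \<in> basis V \<and> t \<in> basis V")
    case True
    then show ?thesis using blk by (simp add: superext_def)
  next
    case False
    then show ?thesis using DProgD(2)[OF e P] by (auto simp: superext_def op_on_def)
  qed
qed

lemma split_pair: "finite X \<Longrightarrow> W \<subseteq> X \<Longrightarrow> c \<in> basis (X - W) \<Longrightarrow> c' \<in> basis (X - W) \<Longrightarrow>
    (\<forall>q\<in>X - W. merge W u c q = merge W v c' q) \<longleftrightarrow> c = c'"
  by (auto simp: merge_def basis_def fun_eq_iff)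

lemma ext_merge:
  assumes "finite X" "W \<subseteq> X" "u \<in> basis W" "v \<in> basis W" "c \<in> basis (X - W)" "c' \<in> basis (X - W)"
  shows "ext W X A (merge W u c) (merge W v c') = (if c = c' then A u v else 0)"
  using assms split_pair[OF assms(1,2,5,6), of u v] merge_basisO[OF assms(2,3,5)] merge_basisO[OF assms(2,4,6)]
  by (simp add: ext_def)

lemma qform_ext:
  assumes X: "finite X" and WX: "W \<subseteq> X"
  shows "qform X (ext W X A) \<psi> = (\<Sum>c\<in>basis (X - W). qform W A (\<lambda>u. \<psi> (merge W u c)))"
proof -
  have fin: "finite (basis (X - W))" "finite (basis W)" using X finite_subset[OF WX X] by auto
  have "qform X (ext W X A) \<psi> = (\<Sum>u\<in>basis W. \<Sum>c\<in>basis (X - W). \<Sum>v\<in>basis W. \<Sum>c'\<in>basis (X - W).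
      cnj (\<psi> (merge W u c)) * ext W X A (merge W u c) (merge W v c') * \<psi> (merge W v c'))"
    unfolding qform_def split_sum[OF X WX] ..
  also have "\<dots> = (\<Sum>u\<in>basis W. \<Sum>c\<in>basis (X - W). \<Sum>v\<in>basis W.
      cnj (\<psi> (merge W u c)) * A u v * \<psi> (merge W v c))"
  proof (intro sum.cong refl)
    fix u c v assume uc: "u \<in> basis W" "c \<in> basis (X - W)" "v \<in> basis W"
    have "(\<Sum>c'\<in>basis (X - W). cnj (\<psi> (merge W u c)) * ext W X A (merge W u c) (merge W v c') * \<psi> (merge W v c'))
        = (\<Sum>c'\<in>basis (X - W). if c = c' then cnj (\<psi> (merge W u c)) * A u v * \<psi> (merge W v c) else 0)"
      using uc by (intro sum.cong refl) (simp add: ext_merge[OF X WX])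
    also have "\<dots> = cnj (\<psi> (merge W u c)) * A u v * \<psi> (merge W v c)" using fin uc by simp
    finally show "(\<Sum>c'\<in>basis (X - W). cnj (\<psi> (merge W u c)) * ext W X A (merge W u c) (merge W v c') * \<psi> (merge W v c'))
        = cnj (\<psi> (merge W u c)) * A u v * \<psi> (merge W v c)" .
  qed
  also have "\<dots> = (\<Sum>c\<in>basis (X - W). \<Sum>u\<in>basis W. \<Sum>v\<in>basis W.
      cnj (\<psi> (merge W u c)) * A u v * \<psi> (merge W v c))" by (rule sum.swap)
  also have "\<dots> = (\<Sum>c\<in>basis (X - W). qform W A (\<lambda>u. \<psi> (merge W u c)))" by (simp add: qform_def)
  finally show ?thesis .
qed

lemma op_on_ext[simp]: "op_on X (ext W X A)" by (simp add: op_on_def ext_def)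

lemma psd_ext:
  assumes X: "finite X" and WX: "W \<subseteq> X" and A: "psd W A"
  shows "psd X (ext W X A)"
proof -
  have q: "Im (qform W A \<phi>) = 0 \<and> 0 \<le> Re (qform W A \<phi>)" for \<phi> using A by (simp add: psd_def)
  show ?thesis unfolding psd_def qform_ext[OF X WX] Im_sum Re_sum using q by (simp add: sum_nonneg)
qed

lemma ident_ext: "V \<subseteq> X \<Longrightarrow> ext V X (ident V) = ident X"
  by (auto simp: ext_def ident_def fun_eq_iff restr_def basis_def)

lemma op_on_ident[simp]: "op_on X (ident X)" by (simp add: op_on_def ident_def)

lemma mult_ident: assumes "finite X" shows "mult X (ident X) A s t = (if s \<in> basis X then A s t else 0)"
proof -
  have "mult X (ident X) A s t = (\<Sum>u\<in>basis X. if u = s then (if s \<in> basis X then A s t else 0) else 0)"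
    unfolding mult_def ident_def by (intro sum.cong refl) auto
  also have "\<dots> = (if s \<in> basis X then A s t else 0)" using assms by simp
  finally show ?thesis .
qed

lemma trace_ident: assumes "finite X" shows "trace X (mult X (ident X) A) = trace X A"
  unfolding trace_def mult_ident[OF assms] by simp

lemma ext_minus: "ext W X (minus_op A B) = minus_op (ext W X A) (ext W X B)"
  by (simp add: ext_def minus_op_def fun_eq_iff)

lemma trace_mult_minus: "trace X (mult X (minus_op A B) C) = trace X (mult X A C) - trace X (mult X B C)"
  unfolding trace_mult_eq minus_op_def by (simp add: algebra_simps sum_subtractf)

lemma qform_minus: "qform X (minus_op A B) \<psi> = qform X A \<psi> - qform X B \<psi>"
  unfolding qform_def minus_op_def by (simp add: algebra_simps sum_subtractf)

lemma op_on_minus: "op_on X A \<Longrightarrow> op_on X B \<Longrightarrow> op_on X (minus_op A B)"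
  by (simp add: op_on_def minus_op_def)

lemma psd_I_minus_dual:
  assumes V: "finite V" and e: "e \<in> DProg V"
  shows "psd V (minus_op (ident V) (dual V V e (ident V)))"
proof -
  have "Im (qform V (minus_op (ident V) (dual V V e (ident V))) \<psi>) = 0 \<and>
        0 \<le> Re (qform V (minus_op (ident V) (dual V V e (ident V))) \<psi>)" for \<psi>
  proof -
    let ?P = "proj V \<psi>"
    have "qform V (dual V V e (ident V)) \<psi> = trace V (mult V (ident V) (superext V V e ?P))"
      by (rule qform_dual[OF V _ e]) simp
    also have "\<dots> = trace V (e ?P)" using trace_ident[OF V] superext_self[OF V e op_on_proj] by simp
    finally have d: "qform V (dual V V e (ident V)) \<psi> = trace V (e ?P)" .
    have i: "qform V (ident V) \<psi> = trace V ?P" using trace_proj[OF V] by simp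
    have pe: "psd V (e ?P)" using DProgD(5)[OF e V _ psd_proj] superext_self[OF V e op_on_proj] by simp
    have t1: "Im (trace V (e ?P)) = 0" using psd_trace[OF V pe] by simp
    have t2: "Im (trace V ?P) = 0" using psd_trace[OF V psd_proj] by simp
    have t3: "Re (trace V (e ?P)) \<le> Re (trace V ?P)" using DProgD(6)[OF e psd_proj] .
    show ?thesis unfolding qform_minus d i using t1 t2 t3 by simp
  qed
  moreover have "op_on V (minus_op (ident V) (dual V V e (ident V)))" by (simp add: op_on_minus)
  ultimately show ?thesis by (simp add: psd_def)
qed

lemma trace_superext_le:
  assumes X: "finite X" and VX: "V \<subseteq> X" and e: "e \<in> DProg V" and \<rho>: "psd X \<rho>"
  shows "Re (trace X (superext V X e \<rho>)) \<le> Re (trace X \<rho>)"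
proof -
  have V: "finite V" using X VX finite_subset by auto
  let ?D = "dual V V e (ident V)"
  have "trace X (superext V X e \<rho>) = trace X (mult X (ext V X (ident V)) (superext V X e \<rho>))"
    using ident_ext[OF VX] trace_ident[OF X] by simp
  also have "\<dots> = trace X (mult X (dual V X e (ext V X (ident V))) \<rho>)" by (rule dual_trace[OF X VX e])
  also have "\<dots> = trace X (mult X (ext V X ?D) \<rho>)" using ext_dual[of V V X e "ident V"] VX by simp
  finally have a: "trace X (superext V X e \<rho>) = trace X (mult X (ext V X ?D) \<rho>)" .
  have b: "trace X \<rho> = trace X (mult X (ext V X (ident V)) \<rho>)"
    using ident_ext[OF VX] trace_ident[OF X] by simp
  have "trace X \<rho> - trace X (superext V X e \<rho>) = trace X (mult X (ext V X (minus_op (ident V) ?D)) \<rho>)"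
    unfolding a b ext_minus trace_mult_minus ..
  moreover have "0 \<le> Re (trace X (mult X (ext V X (minus_op (ident V) ?D)) \<rho>))"
    using trace_psd_psd(2)[OF X psd_ext[OF X VX psd_I_minus_dual[OF V e]] \<rho>] .
  ultimately have "0 \<le> Re (trace X \<rho> - trace X (superext V X e \<rho>))" by simp
  thus ?thesis by simp
qed


locale pairing =
  fixes V V' :: "qvar set"
  assumes finV: "finite V" and finV': "finite V'" and card_eq: "card V' = card V" and disj: "V \<inter> V' = {}"
begin

abbreviation "P \<equiv> pairvar V V'"

lemma pair_props: "q \<in> V \<Longrightarrow> P q \<in> V'"
proof -
  assume q: "q \<in> V"
  let ?L = "sorted_list_of_set V" and ?L' = "sorted_list_of_set V'"
  have "q \<in> set ?L" using q finV by simp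
  then obtain i where i: "i < length ?L" "?L ! i = q" by (auto simp: in_set_conv_nth)
  let ?i0 = "LEAST i. ?L ! i = q"
  have "?L ! ?i0 = q" using i by (metis (mono_tags, lifting) LeastI)
  have "?i0 \<le> i" using i by (metis (mono_tags, lifting) Least_le)
  hence "?i0 < length ?L'" using i card_eq by simp
  thus "P q \<in> V'" unfolding pairvar_def using finV' by (metis nth_mem set_sorted_list_of_set)
qed

lemma pair_least: "q \<in> V \<Longrightarrow> sorted_list_of_set V ! (LEAST i. sorted_list_of_set V ! i = q) = q
     \<and> (LEAST i. sorted_list_of_set V ! i = q) < card V"
proof -
  assume q: "q \<in> V"
  let ?L = "sorted_list_of_set V"
  have "q \<in> set ?L" using q finV by simp
  then obtain i where i: "i < length ?L" "?L ! i = q" by (auto simp: in_set_conv_nth)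
  let ?i0 = "LEAST i. ?L ! i = q"
  have "?L ! ?i0 = q" using i by (metis (mono_tags, lifting) LeastI)
  moreover have "?i0 \<le> i" using i by (metis (mono_tags, lifting) Least_le)
  ultimately show ?thesis using i by simp
qed

lemma pair_inj: "inj_on P V"
proof (rule inj_onI)
  fix q1 q2 assume q: "q1 \<in> V" "q2 \<in> V" "P q1 = P q2"
  let ?L = "sorted_list_of_set V" and ?L' = "sorted_list_of_set V'"
  let ?i1 = "LEAST i. ?L ! i = q1" and ?i2 = "LEAST i. ?L ! i = q2"
  have l1: "?L ! ?i1 = q1" "?i1 < length ?L'" using pair_least[OF q(1)] card_eq by auto
  have l2: "?L ! ?i2 = q2" "?i2 < length ?L'" using pair_least[OF q(2)] card_eq by auto
  have "?L' ! ?i1 = ?L' ! ?i2" using q(3) unfolding pairvar_def .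
  moreover have "distinct ?L'" by simp
  ultimately have "?i1 = ?i2" using l1(2) l2(2) by (metis nth_eq_iff_index_eq)
  thus "q1 = q2" using l1(1) l2(1) by metis
qed

lemma pair_img: "P ` V = V'"
proof -
  have "P ` V \<subseteq> V'" using pair_props by auto
  moreover have "card (P ` V) = card V'" using card_image[OF pair_inj] card_eq by simp
  ultimately show ?thesis using card_subset_eq finV' by blast
qed

definition Pinv where "Pinv = inv_into V P"

lemma Pinv: "q \<in> V' \<Longrightarrow> Pinv q \<in> V \<and> P (Pinv q) = q"
  unfolding Pinv_def using pair_img by (metis inv_into_into f_inv_into_f)

lemma Pinv_P: "q \<in> V \<Longrightarrow> Pinv (P q) = q"
  unfolding Pinv_def using pair_inj by (simp add: inv_into_f_f)

definition R :: "bst \<Rightarrow> bst" where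
  "R s = (\<lambda>q. if q \<in> V then s (P q) else False)"

definition G :: "bst \<Rightarrow> bst \<Rightarrow> bst" where
  "G l m = (\<lambda>q. if q \<in> V then l q else if q \<in> V' then m (Pinv q) else False)"

lemma R_basis[simp]: "R s \<in> basis V" by (simp add: R_def basis_def)

lemma G_basis: "G l m \<in> basis (V \<union> V')" by (simp add: G_def basis_def)

lemma restr_G: "l \<in> basis V \<Longrightarrow> restr V (G l m) = l"
  by (auto simp: G_def restr_def basis_def)

lemma R_G: "m \<in> basis V \<Longrightarrow> R (G l m) = m"
proof (intro ext)
  fix q assume m: "m \<in> basis V"
  show "R (G l m) q = m q"
  proof (cases "q \<in> V")
    case True
    then have "P q \<in> V'" "P q \<notin> V" using pair_props disj by auto
    then show ?thesis using True Pinv_P by (simp add: R_def G_def)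
  next
    case False
    then show ?thesis using m by (simp add: R_def basis_def)
  qed
qed

lemma G_FR: "s \<in> basis (V \<union> V') \<Longrightarrow> G (restr V s) (R s) = s"
proof (intro ext)
  fix q assume s: "s \<in> basis (V \<union> V')"
  show "G (restr V s) (R s) q = s q"
  proof (cases "q \<in> V")
    case True then show ?thesis by (simp add: G_def restr_def)
  next
    case False
    show ?thesis
    proof (cases "q \<in> V'")
      case True
      then show ?thesis using False Pinv[OF True] by (simp add: G_def R_def)
    next
      case False2: False
      then show ?thesis using False s by (simp add: G_def basis_def)
    qed
  qed
qed

lemma R_merge: "R (merge V i s) = R s"
proof (intro ext)
  fix q show "R (merge V i s) q = R s q"
    using pair_props disj by (auto simp: R_def merge_def)
qed

lemma sum_G: "(\<Sum>s\<in>basis (V \<union> V'). f s) = (\<Sum>l\<in>basis V. \<Sum>m\<in>basis V. f (G l m))"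
proof -
  have "(\<Sum>s\<in>basis (V \<union> V'). f s) = (\<Sum>p\<in>basis V \<times> basis V. f (G (fst p) (snd p)))"
    by (rule sum.reindex_bij_witness[where i = "\<lambda>p. G (fst p) (snd p)" and j = "\<lambda>s. (restr V s, R s)"])
       (auto simp: G_FR G_basis restr_G R_G)
  thus ?thesis by (simp add: sum.cartesian_product split_def)
qed

definition d :: real where "d = 2 ^ card V"

lemma d_pos: "d > 0" by (simp add: d_def)

lemma omega_G: "l \<in> basis V \<Longrightarrow> m \<in> basis V \<Longrightarrow>
    omega_vec V V' (G l m) = (if l = m then complex_of_real (1 / sqrt d) else 0)"
proof -
  assume lm: "l \<in> basis V" "m \<in> basis V"
  have "(\<forall>q\<in>V. G l m q = G l m (P q)) \<longleftrightarrow> restr V (G l m) = R (G l m)"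
    by (auto simp: restr_def R_def fun_eq_iff)
  also have "\<dots> \<longleftrightarrow> l = m" using lm by (simp add: restr_G R_G)
  finally show ?thesis using G_basis by (simp add: omega_vec_def d_def)
qed

end


lemma minus_minus_op: "minus_op (ident X) (minus_op (ident X) M) = M"
  by (simp add: minus_op_def fun_eq_iff)

lemma effect_compl: "effect X M \<Longrightarrow> effect X (minus_op (ident X) M)"
  by (simp add: effect_def minus_minus_op)

lemma effect_ext:
  assumes X: "finite X" and WX: "W \<subseteq> X" and M: "effect W M"
  shows "effect X (ext W X M)"
proof -
  have "psd X (ext W X M)" using psd_ext[OF X WX] M by (simp add: effect_def)
  moreover have "psd X (ext W X (minus_op (ident W) M))" using psd_ext[OF X WX] M by (simp add: effect_def)
  ultimately show ?thesis unfolding effect_def ext_minus ident_ext[OF WX] by simp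
qed

lemma effect_trace:
  assumes X: "finite X" and M: "effect X M" and \<tau>: "psd X \<tau>"
  shows "Im (trace X (mult X M \<tau>)) = 0" "0 \<le> Re (trace X (mult X M \<tau>))"
    "Re (trace X (mult X M \<tau>)) \<le> Re (trace X \<tau>)"
proof -
  show "Im (trace X (mult X M \<tau>)) = 0" "0 \<le> Re (trace X (mult X M \<tau>))"
    using trace_psd_psd[OF X _ \<tau>] M by (auto simp: effect_def)
  have "0 \<le> Re (trace X (mult X (minus_op (ident X) M) \<tau>))"
    using trace_psd_psd[OF X _ \<tau>] M by (auto simp: effect_def)
  thus "Re (trace X (mult X M \<tau>)) \<le> Re (trace X \<tau>)"
    unfolding trace_mult_minus trace_ident[OF X] by simp
qed

lemma cs_unit:
  assumes B: "finite B" and w: "(\<Sum>t\<in>B. cnj (w t) * w t) = 1"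
  shows "Re (cnj (\<Sum>t\<in>B. cnj (w t) * \<psi> t) * (\<Sum>t\<in>B. cnj (w t) * \<psi> t)) \<le> Re (\<Sum>t\<in>B. cnj (\<psi> t) * \<psi> t)"
proof -
  define z where "z = (\<Sum>t\<in>B. cnj (w t) * \<psi> t)"
  have cz: "(\<Sum>t\<in>B. cnj (\<psi> t) * w t) = cnj z" unfolding z_def by (simp add: mult.commute)
  have e: "cnj (\<psi> t - z * w t) * (\<psi> t - z * w t) = cnj (\<psi> t) * \<psi> t - z * (cnj (\<psi> t) * w t)
     - cnj z * (cnj (w t) * \<psi> t) + cnj z * z * (cnj (w t) * w t)" for t
    by (simp add: algebra_simps)
  have "(\<Sum>t\<in>B. cnj (\<psi> t - z * w t) * (\<psi> t - z * w t)) =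
     (\<Sum>t\<in>B. cnj (\<psi> t) * \<psi> t) - z * cnj z - cnj z * z + cnj z * z * 1"
    unfolding e sum.distrib sum_subtractf sum_distrib_left[symmetric] cz w z_def[symmetric] ..
  hence "(\<Sum>t\<in>B. cnj (\<psi> t - z * w t) * (\<psi> t - z * w t)) = (\<Sum>t\<in>B. cnj (\<psi> t) * \<psi> t) - cnj z * z"
    by (simp add: algebra_simps)
  moreover have "0 \<le> Re (\<Sum>t\<in>B. cnj (\<psi> t - z * w t) * (\<psi> t - z * w t))"
    unfolding Re_sum by (intro sum_nonneg) (metis cnj_mult_self)
  ultimately show ?thesis unfolding z_def[symmetric] by simp
qed

lemma ext_self: "op_on W A \<Longrightarrow> ext W W A = A"
  by (auto simp: ext_def fun_eq_iff op_on_def)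

context pairing
begin

abbreviation "\<omega> \<equiv> omega_vec V V'"
abbreviation "X' \<equiv> V \<union> V'"

lemma finX': "finite X'" using finV finV' by simp

lemma omega_out: "s \<notin> basis X' \<Longrightarrow> \<omega> s = 0" by (simp add: omega_vec_def)

lemma op_on_Omega: "op_on X' (Omega V V')"
  by (auto simp: op_on_def Omega_def omega_out)

lemma omega_norm: "(\<Sum>s\<in>basis X'. cnj (\<omega> s) * \<omega> s) = 1"
proof -
  have "(\<Sum>s\<in>basis X'. cnj (\<omega> s) * \<omega> s) = (\<Sum>l\<in>basis V. \<Sum>m\<in>basis V. cnj (\<omega> (G l m)) * \<omega> (G l m))"
    by (rule sum_G)
  also have "\<dots> = (\<Sum>l\<in>basis V. \<Sum>m\<in>basis V. if m = l then complex_of_real (1 / d) else 0)"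
  proof (intro sum.cong refl)
    fix l m assume "l \<in> basis V" "m \<in> basis V"
    then show "cnj (\<omega> (G l m)) * \<omega> (G l m) = (if m = l then complex_of_real (1 / d) else 0)"
      using d_pos by (auto simp: omega_G simp flip: of_real_mult)
  qed
  also have "\<dots> = of_nat (card (basis V)) * complex_of_real (1 / d)" using finV by simp
  also have "\<dots> = 1" using card_basis[OF finV] d_pos by (simp add: d_def)
  finally show ?thesis .
qed

lemma psd_Omega: "psd X' (Omega V V')"
proof -
  have "Im (qform X' (Omega V V') \<psi>) = 0 \<and> 0 \<le> Re (qform X' (Omega V V') \<psi>)" for \<psi>
  proof -
    have "qform X' (Omega V V') \<psi> = cnj (\<Sum>t\<in>basis X'. cnj (\<omega> t) * \<psi> t) * (\<Sum>t\<in>basis X'. cnj (\<omega> t) * \<psi> t)"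
      unfolding qform_gq Omega_def gq_rank1 ..
    thus ?thesis using cnj_mult_self by (simp only:)
  qed
  thus ?thesis using op_on_Omega by (simp add: psd_def)
qed

lemma psd_I_Omega: "psd X' (minus_op (ident X') (Omega V V'))"
proof -
  have "Im (qform X' (minus_op (ident X') (Omega V V')) \<psi>) = 0 \<and> 0 \<le> Re (qform X' (minus_op (ident X') (Omega V V')) \<psi>)" for \<psi>
  proof -
    define z where "z = (\<Sum>t\<in>basis X'. cnj (\<omega> t) * \<psi> t)"
    have q1: "qform X' (Omega V V') \<psi> = cnj z * z"
      unfolding qform_gq Omega_def gq_rank1 z_def ..
    have q2: "qform X' (ident X') \<psi> = (\<Sum>t\<in>basis X'. cnj (\<psi> t) * \<psi> t)"
      unfolding trace_proj[OF finX', symmetric] trace_def proj_def by (simp add: mult.commute)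
    have "Im (\<Sum>t\<in>basis X'. cnj (\<psi> t) * \<psi> t) = 0" unfolding Im_sum by (simp add: algebra_simps)
    moreover have "Re (cnj z * z) \<le> Re (\<Sum>t\<in>basis X'. cnj (\<psi> t) * \<psi> t)"
      unfolding z_def by (rule cs_unit[OF basis_finite[OF finX'] omega_norm])
    moreover have "Im (cnj z * z) = 0" using cnj_mult_self by simp
    ultimately show ?thesis unfolding qform_minus q1 q2 by simp
  qed
  thus ?thesis using op_on_Omega by (simp add: psd_def op_on_minus)
qed

lemma effect_Omega: "effect X' (Omega V V')"
  using psd_Omega psd_I_Omega by (simp add: effect_def)

end


lemma effect_dual:
  assumes W: "finite W" and VW: "V \<subseteq> W" and e: "e \<in> DProg V" and N: "effect W N"
  shows "effect W (dual V W e N)"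
proof -
  have NP: "psd W N" using N by (simp add: effect_def)
  have "Im (qform W (dual V W e N) \<psi>) = 0 \<and> 0 \<le> Re (qform W (dual V W e N) \<psi>) \<and>
        Im (qform W (minus_op (ident W) (dual V W e N)) \<psi>) = 0 \<and> 0 \<le> Re (qform W (minus_op (ident W) (dual V W e N)) \<psi>)" for \<psi>
  proof -
    let ?P = "proj W \<psi>"
    have sp: "psd W (superext V W e ?P)" using DProgD(5)[OF e W VW psd_proj] .
    have q: "qform W (dual V W e N) \<psi> = trace W (mult W N (superext V W e ?P))" by (rule qform_dual[OF W VW e])
    have i: "qform W (ident W) \<psi> = trace W ?P" using trace_proj[OF W] by simp
    have t1: "Im (trace W (mult W N (superext V W e ?P))) = 0" "0 \<le> Re (trace W (mult W N (superext V W e ?P)))"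
      "Re (trace W (mult W N (superext V W e ?P))) \<le> Re (trace W (superext V W e ?P))"
      using effect_trace[OF W N sp] by auto
    have t2: "Re (trace W (superext V W e ?P)) \<le> Re (trace W ?P)" by (rule trace_superext_le[OF W VW e psd_proj])
    have t3: "Im (trace W ?P) = 0" using psd_trace[OF W psd_proj] by simp
    show ?thesis unfolding qform_minus q i using t1 t2 t3 by simp
  qed
  thus ?thesis by (simp add: effect_def psd_def op_on_minus)
qed

lemma sum_perm6:
  "(\<Sum>k\<in>A. \<Sum>b\<in>B. \<Sum>l\<in>A. \<Sum>a\<in>B. \<Sum>i\<in>A. \<Sum>j\<in>A. F k b l a i j) =
   (\<Sum>i\<in>A. \<Sum>j\<in>A. \<Sum>k\<in>A. \<Sum>l\<in>A. \<Sum>a\<in>B. \<Sum>b\<in>B. F k b l a i j)"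
proof -
  have "(\<Sum>k\<in>A. \<Sum>b\<in>B. \<Sum>l\<in>A. \<Sum>a\<in>B. \<Sum>i\<in>A. \<Sum>j\<in>A. F k b l a i j) =
     (\<Sum>p\<in>A \<times> B \<times> A \<times> B \<times> A \<times> A. case p of (k, b, l, a, i, j) \<Rightarrow> F k b l a i j)"
    by (simp add: sum.cartesian_product)
  also have "\<dots> = (\<Sum>p\<in>A \<times> A \<times> A \<times> A \<times> B \<times> B. case p of (i, j, k, l, a, b) \<Rightarrow> F k b l a i j)"
    by (rule sum.reindex_bij_witness[where i = "\<lambda>(i, j, k, l, a, b). (k, b, l, a, i, j)"
        and j = "\<lambda>(k, b, l, a, i, j). (i, j, k, l, a, b)"]) auto
  also have "\<dots> = (\<Sum>i\<in>A. \<Sum>j\<in>A. \<Sum>k\<in>A. \<Sum>l\<in>A. \<Sum>a\<in>B. \<Sum>b\<in>B. F k b l a i j)"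
    by (simp add: sum.cartesian_product)
  finally show ?thesis .
qed

lemma sum_perm4:
  "(\<Sum>k\<in>A. \<Sum>l\<in>A. \<Sum>i\<in>A. \<Sum>j\<in>A. F k l i j) = (\<Sum>i\<in>A. \<Sum>j\<in>A. \<Sum>k\<in>A. \<Sum>l\<in>A. F k l i j)"
proof -
  have "(\<Sum>k\<in>A. \<Sum>l\<in>A. \<Sum>i\<in>A. \<Sum>j\<in>A. F k l i j) =
     (\<Sum>p\<in>A \<times> A \<times> A \<times> A. case p of (k, l, i, j) \<Rightarrow> F k l i j)"
    by (simp add: sum.cartesian_product)
  also have "\<dots> = (\<Sum>p\<in>A \<times> A \<times> A \<times> A. case p of (i, j, k, l) \<Rightarrow> F k l i j)"
    by (rule sum.reindex_bij_witness[where i = "\<lambda>(i, j, k, l). (k, l, i, j)"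
        and j = "\<lambda>(k, l, i, j). (i, j, k, l)"]) auto
  also have "\<dots> = (\<Sum>i\<in>A. \<Sum>j\<in>A. \<Sum>k\<in>A. \<Sum>l\<in>A. F k l i j)"
    by (simp add: sum.cartesian_product)
  finally show ?thesis .
qed


locale rep = pairing +
  fixes X W :: "qvar set" and M \<rho> :: qop
  assumes finX: "finite X" and VX: "V \<subseteq> X" and WX: "W \<subseteq> X" and psdM: "psd W M" and psd\<rho>: "psd X \<rho>"
begin

definition Nt where "Nt = ext W X M"

definition K where "K i j k l = (\<Sum>a\<in>basis (X - V). \<Sum>b\<in>basis (X - V).
   \<rho> (merge V i a) (merge V j b) * Nt (merge V k b) (merge V l a))"

lemma lhs_expand:
  assumes g: "g \<in> DProg V"
  shows "trace X (mult X Nt (superext V X g \<rho>)) =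
    (\<Sum>i\<in>basis V. \<Sum>j\<in>basis V. \<Sum>k\<in>basis V. \<Sum>l\<in>basis V. K i j k l * g (ebasis V i j) l k)"
proof -
  let ?O = "basis (X - V)" and ?B = "basis V"
  have "trace X (mult X Nt (superext V X g \<rho>)) = (\<Sum>t\<in>basis X. \<Sum>s\<in>basis X. Nt t s *
     (\<Sum>i\<in>?B. \<Sum>j\<in>?B. \<rho> (merge V i s) (merge V j t) * g (ebasis V i j) (restr V s) (restr V t)))"
    unfolding trace_mult_eq by (intro sum.cong refl) (simp add: superext_expand[OF finV g])
  also have "\<dots> = (\<Sum>k\<in>?B. \<Sum>b\<in>?O. \<Sum>l\<in>?B. \<Sum>a\<in>?O. \<Sum>i\<in>?B. \<Sum>j\<in>?B.
      Nt (merge V k b) (merge V l a) * (\<rho> (merge V i a) (merge V j b) * g (ebasis V i j) l k))"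
    unfolding split_sum[OF finX VX] by (intro sum.cong refl) (simp add: sum_distrib_left)
  also have "\<dots> = (\<Sum>i\<in>?B. \<Sum>j\<in>?B. \<Sum>k\<in>?B. \<Sum>l\<in>?B. \<Sum>a\<in>?O. \<Sum>b\<in>?O.
      Nt (merge V k b) (merge V l a) * (\<rho> (merge V i a) (merge V j b) * g (ebasis V i j) l k))"
    by (rule sum_perm6)
  also have "\<dots> = (\<Sum>i\<in>?B. \<Sum>j\<in>?B. \<Sum>k\<in>?B. \<Sum>l\<in>?B. K i j k l * g (ebasis V i j) l k)"
    unfolding K_def sum_distrib_right by (intro sum.cong refl) (simp add: mult.commute mult.left_commute)
  finally show ?thesis .
qed

definition \<sigma>0 where "\<sigma>0 s t = (if s \<in> basis X' \<and> t \<in> basis X' then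
   complex_of_real d * K (restr V s) (restr V t) (R t) (R s) else 0)"

lemma op_on_\<sigma>0: "op_on X' \<sigma>0" by (simp add: op_on_def \<sigma>0_def)

lemma merge_G_basis: "i \<in> basis V \<Longrightarrow> merge V i (G l m) \<in> basis X'"
  using merge_basis[of i V "G l m" X'] G_basis by simp

lemma rhs_expand:
  assumes g: "g \<in> DProg V"
  shows "trace X' (mult X' (Omega V V') (superext V X' g \<sigma>0)) =
    (\<Sum>i\<in>basis V. \<Sum>j\<in>basis V. \<Sum>k\<in>basis V. \<Sum>l\<in>basis V. K i j k l * g (ebasis V i j) l k)"
proof -
  let ?B = "basis V"
  define H where "H k l = (\<Sum>i\<in>?B. \<Sum>j\<in>?B. K i j k l * g (ebasis V i j) l k)" for k l
  have sq: "complex_of_real (1 / sqrt d) * cnj (complex_of_real (1 / sqrt d)) = complex_of_real (1 / d)"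
    using d_pos by (simp flip: of_real_mult)
  have F: "Omega V V' (G k k') (G l l') * superext V X' g \<sigma>0 (G l l') (G k k') =
      (if k' = k then (if l' = l then H k l else 0) else 0)"
    if kl: "k \<in> ?B" "k' \<in> ?B" "l \<in> ?B" "l' \<in> ?B" for k k' l l'
  proof (cases "k' = k \<and> l' = l")
    case True
    have s: "superext V X' g \<sigma>0 (G l l) (G k k) = (\<Sum>i\<in>?B. \<Sum>j\<in>?B. complex_of_real d * K i j k l * g (ebasis V i j) l k)"
      unfolding superext_expand[OF finV g] using kl G_basis
      by (auto intro!: sum.cong simp: \<sigma>0_def merge_G_basis R_merge R_G restr_G)
    have "Omega V V' (G k k) (G l l) = complex_of_real (1 / d)"
      using kl sq by (simp add: Omega_def omega_G)
    hence "Omega V V' (G k k) (G l l) * superext V X' g \<sigma>0 (G l l) (G k k) = H k l"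
      unfolding s H_def sum_distrib_left using d_pos
      by (intro sum.cong refl) (simp add: field_simps flip: of_real_mult)
    then show ?thesis using True by simp
  next
    case False
    then have "Omega V V' (G k k') (G l l') = 0" using kl by (auto simp: Omega_def omega_G)
    then show ?thesis using False by auto
  qed
  have "trace X' (mult X' (Omega V V') (superext V X' g \<sigma>0)) =
      (\<Sum>k\<in>?B. \<Sum>k'\<in>?B. \<Sum>l\<in>?B. \<Sum>l'\<in>?B. Omega V V' (G k k') (G l l') * superext V X' g \<sigma>0 (G l l') (G k k'))"
    unfolding trace_mult_eq sum_G ..
  also have "\<dots> = (\<Sum>k\<in>?B. \<Sum>k'\<in>?B. \<Sum>l\<in>?B. \<Sum>l'\<in>?B. (if k' = k then (if l' = l then H k l else 0) else 0))"
    by (intro sum.cong refl) (simp add: F)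
  also have "\<dots> = (\<Sum>k\<in>?B. \<Sum>l\<in>?B. H k l)"
  proof (rule sum.cong[OF refl])
    fix k assume k: "k \<in> ?B"
    have "(\<Sum>k'\<in>?B. \<Sum>l\<in>?B. \<Sum>l'\<in>?B. (if k' = k then (if l' = l then H k l else 0) else 0))
        = (\<Sum>k'\<in>?B. if k' = k then (\<Sum>l\<in>?B. H k l) else 0)"
      using finV by (intro sum.cong refl) auto
    also have "\<dots> = (\<Sum>l\<in>?B. H k l)" using finV k by simp
    finally show "(\<Sum>k'\<in>?B. \<Sum>l\<in>?B. \<Sum>l'\<in>?B. (if k' = k then (if l' = l then H k l else 0) else 0)) = (\<Sum>l\<in>?B. H k l)" .
  qed
  also have "\<dots> = (\<Sum>i\<in>?B. \<Sum>j\<in>?B. \<Sum>k\<in>?B. \<Sum>l\<in>?B. K i j k l * g (ebasis V i j) l k)"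
    unfolding H_def by (rule sum_perm4)
  finally show ?thesis .
qed

end


lemma sum_perm7:
  "(\<Sum>i\<in>A. \<Sum>l\<in>A. \<Sum>j\<in>A. \<Sum>k\<in>A. \<Sum>a\<in>B. \<Sum>b\<in>B. \<Sum>r\<in>C. F i l j k a b r) =
   (\<Sum>r\<in>C. \<Sum>i\<in>A. \<Sum>a\<in>B. \<Sum>j\<in>A. \<Sum>b\<in>B. \<Sum>l\<in>A. \<Sum>k\<in>A. F i l j k a b r)"
proof -
  have "(\<Sum>i\<in>A. \<Sum>l\<in>A. \<Sum>j\<in>A. \<Sum>k\<in>A. \<Sum>a\<in>B. \<Sum>b\<in>B. \<Sum>r\<in>C. F i l j k a b r) =
     (\<Sum>p\<in>A \<times> A \<times> A \<times> A \<times> B \<times> B \<times> C. case p of (i, l, j, k, a, b, r) \<Rightarrow> F i l j k a b r)"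
    by (simp add: sum.cartesian_product)
  also have "\<dots> = (\<Sum>p\<in>C \<times> A \<times> B \<times> A \<times> B \<times> A \<times> A. case p of (r, i, a, j, b, l, k) \<Rightarrow> F i l j k a b r)"
    by (rule sum.reindex_bij_witness[where i = "\<lambda>(r, i, a, j, b, l, k). (i, l, j, k, a, b, r)"
        and j = "\<lambda>(i, l, j, k, a, b, r). (r, i, a, j, b, l, k)"]) auto
  also have "\<dots> = (\<Sum>r\<in>C. \<Sum>i\<in>A. \<Sum>a\<in>B. \<Sum>j\<in>A. \<Sum>b\<in>B. \<Sum>l\<in>A. \<Sum>k\<in>A. F i l j k a b r)"
    by (simp add: sum.cartesian_product)
  finally show ?thesis .
qed

context rep
begin

lemma psd_Nt: "psd X Nt" unfolding Nt_def using psd_ext[OF finX WX psdM] .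

lemma qform_\<sigma>0_eq:
  "\<exists>(n::nat) \<chi>. qform X' \<sigma>0 \<psi> = complex_of_real d * (\<Sum>r<n. qform X \<rho> (\<chi> r))"
proof -
  obtain n :: nat and f where f: "\<forall>x\<in>basis X. \<forall>y\<in>basis X. Nt x y = (\<Sum>r<n. f r x * cnj (f r y))"
    using psd_factor[OF finX psd_Nt] by blast
  let ?B = "basis V" and ?O = "basis (X - V)"
  define \<phi> where "\<phi> i l = \<psi> (G i l)" for i l
  define \<chi> where "\<chi> r s = (\<Sum>k\<in>?B. \<phi> (restr V s) k * f r (merge V k s))" for r s
  define T where "T i l j k a b r = cnj (\<phi> i l) * \<phi> j k * \<rho> (merge V i a) (merge V j b)
      * f r (merge V k b) * cnj (f r (merge V l a))" for i l j k a b r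
  have mb: "merge V k b \<in> basis X" if "k \<in> ?B" "b \<in> ?O" for k b using merge_basisO[OF VX that] .
  have "qform X' \<sigma>0 \<psi> = (\<Sum>i\<in>?B. \<Sum>l\<in>?B. \<Sum>j\<in>?B. \<Sum>k\<in>?B. cnj (\<phi> i l) * \<sigma>0 (G i l) (G j k) * \<phi> j k)"
    unfolding qform_def sum_G \<phi>_def ..
  also have "\<dots> = (\<Sum>i\<in>?B. \<Sum>l\<in>?B. \<Sum>j\<in>?B. \<Sum>k\<in>?B. complex_of_real d * (\<Sum>a\<in>?O. \<Sum>b\<in>?O. \<Sum>r<n. T i l j k a b r))"
  proof (intro sum.cong refl)
    fix i l j k assume h: "i \<in> ?B" "l \<in> ?B" "j \<in> ?B" "k \<in> ?B"
    have "\<sigma>0 (G i l) (G j k) = complex_of_real d * K i j k l"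
      using h G_basis by (simp add: \<sigma>0_def restr_G R_G)
    also have "K i j k l = (\<Sum>a\<in>?O. \<Sum>b\<in>?O. \<Sum>r<n. \<rho> (merge V i a) (merge V j b) * (f r (merge V k b) * cnj (f r (merge V l a))))"
      unfolding K_def using f mb h by (intro sum.cong refl) (simp add: sum_distrib_left)
    finally show "cnj (\<phi> i l) * \<sigma>0 (G i l) (G j k) * \<phi> j k = complex_of_real d * (\<Sum>a\<in>?O. \<Sum>b\<in>?O. \<Sum>r<n. T i l j k a b r)"
      unfolding T_def by (simp add: sum_distrib_left sum_distrib_right mult_ac)
  qed
  also have "\<dots> = complex_of_real d * (\<Sum>i\<in>?B. \<Sum>l\<in>?B. \<Sum>j\<in>?B. \<Sum>k\<in>?B. \<Sum>a\<in>?O. \<Sum>b\<in>?O. \<Sum>r<n. T i l j k a b r)"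
    by (simp add: sum_distrib_left)
  also have "(\<Sum>i\<in>?B. \<Sum>l\<in>?B. \<Sum>j\<in>?B. \<Sum>k\<in>?B. \<Sum>a\<in>?O. \<Sum>b\<in>?O. \<Sum>r<n. T i l j k a b r)
     = (\<Sum>r<n. \<Sum>i\<in>?B. \<Sum>a\<in>?O. \<Sum>j\<in>?B. \<Sum>b\<in>?O. \<Sum>l\<in>?B. \<Sum>k\<in>?B. T i l j k a b r)"
    by (rule sum_perm7)
  also have "\<dots> = (\<Sum>r<n. qform X \<rho> (\<chi> r))"
  proof (rule sum.cong[OF refl])
    fix r
    have cm: "\<chi> r (merge V i a) = (\<Sum>k\<in>?B. \<phi> i k * f r (merge V k a))" if "i \<in> ?B" for i a
      unfolding \<chi>_def using that by simp
    have "qform X \<rho> (\<chi> r) = (\<Sum>i\<in>?B. \<Sum>a\<in>?O. \<Sum>j\<in>?B. \<Sum>b\<in>?O.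
        cnj (\<chi> r (merge V i a)) * \<rho> (merge V i a) (merge V j b) * \<chi> r (merge V j b))"
      unfolding qform_def split_sum[OF finX VX] ..
    also have "\<dots> = (\<Sum>i\<in>?B. \<Sum>a\<in>?O. \<Sum>j\<in>?B. \<Sum>b\<in>?O. \<Sum>l\<in>?B. \<Sum>k\<in>?B. T i l j k a b r)"
      by (intro sum.cong refl)
         (simp add: cm T_def sum_distrib_left sum_distrib_right mult_ac)
    finally show "(\<Sum>i\<in>?B. \<Sum>a\<in>?O. \<Sum>j\<in>?B. \<Sum>b\<in>?O. \<Sum>l\<in>?B. \<Sum>k\<in>?B. T i l j k a b r) = qform X \<rho> (\<chi> r)" by simp
  qed
  finally show ?thesis by blast
qed

lemma psd_\<sigma>0: "psd X' \<sigma>0"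
proof -
  have "Im (qform X' \<sigma>0 \<psi>) = 0 \<and> 0 \<le> Re (qform X' \<sigma>0 \<psi>)" for \<psi>
  proof -
    obtain n :: nat and \<chi> where e: "qform X' \<sigma>0 \<psi> = complex_of_real d * (\<Sum>r<n. qform X \<rho> (\<chi> r))"
      using qform_\<sigma>0_eq by blast
    have q: "Im (qform X \<rho> \<phi>) = 0 \<and> 0 \<le> Re (qform X \<rho> \<phi>)" for \<phi> using psd\<rho> by (simp add: psd_def)
    have "Im (\<Sum>r<n. qform X \<rho> (\<chi> r)) = 0" unfolding Im_sum using q by simp
    moreover have "0 \<le> Re (\<Sum>r<n. qform X \<rho> (\<chi> r))" unfolding Re_sum using q by (simp add: sum_nonneg)
    ultimately show ?thesis unfolding e using d_pos by simp
  qed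
  thus ?thesis using op_on_\<sigma>0 by (simp add: psd_def)
qed

end


lemma superext_scale:
  assumes V: "finite V" and g: "g \<in> DProg V"
  shows "superext V Y g (\<lambda>s t. \<sigma> s t / z) = (\<lambda>s t. superext V Y g \<sigma> s t / z)"
  by (intro ext) (simp add: superext_expand[OF V g] sum_divide_distrib)

lemma trace_mult_div: "trace Y (mult Y A (\<lambda>s t. B s t / z)) = trace Y (mult Y A B) / z"
  unfolding trace_mult_eq by (simp add: sum_divide_distrib)

context rep
begin

lemma rep_exists:
  "\<exists>\<sigma> c. pdo X' \<sigma> \<and> c > 0 \<and> (\<forall>g\<in>DProg V. trace X (mult X (ext W X M) (superext V X g \<rho>)) =
      complex_of_real c * trace X' (mult X' (Omega V V') (superext V X' g \<sigma>)))"
proof -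
  define c where "c = 1 + Re (trace X' \<sigma>0)"
  have t0: "0 \<le> Re (trace X' \<sigma>0)" using psd_trace[OF finX' psd_\<sigma>0] by simp
  have cpos: "c > 0" unfolding c_def using t0 by simp
  define \<sigma> where "\<sigma> = (\<lambda>s t. \<sigma>0 s t / complex_of_real c)"
  have ps: "psd X' \<sigma>"
  proof -
    have "qform X' \<sigma> \<psi> = qform X' \<sigma>0 \<psi> / complex_of_real c" for \<psi>
      unfolding qform_def \<sigma>_def by (simp add: sum_divide_distrib)
    moreover have "Im (qform X' \<sigma>0 \<psi>) = 0 \<and> 0 \<le> Re (qform X' \<sigma>0 \<psi>)" for \<psi>
      using psd_\<sigma>0 by (simp add: psd_def)
    ultimately have "Im (qform X' \<sigma> \<psi>) = 0 \<and> 0 \<le> Re (qform X' \<sigma> \<psi>)" for \<psi>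
      using cpos by (simp add: Im_divide_of_real Re_divide_of_real)
    moreover have "op_on X' \<sigma>" using op_on_\<sigma>0 by (simp add: op_on_def \<sigma>_def)
    ultimately show ?thesis by (simp add: psd_def)
  qed
  have "trace X' \<sigma> = trace X' \<sigma>0 / complex_of_real c" unfolding trace_def \<sigma>_def by (simp add: sum_divide_distrib)
  hence "Re (trace X' \<sigma>) = Re (trace X' \<sigma>0) / c" by (simp add: Re_divide_of_real)
  also have "\<dots> \<le> 1" using cpos t0 unfolding c_def by simp
  finally have pd: "pdo X' \<sigma>" using ps by (simp add: pdo_def)
  have "trace X (mult X (ext W X M) (superext V X g \<rho>)) =
      complex_of_real c * trace X' (mult X' (Omega V V') (superext V X' g \<sigma>))" if g: "g \<in> DProg V" for g
  proof -
    have "trace X' (mult X' (Omega V V') (superext V X' g \<sigma>)) = trace X' (mult X' (Omega V V') (superext V X' g \<sigma>0)) / complex_of_real c"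
      unfolding \<sigma>_def superext_scale[OF finV g] trace_mult_div ..
    also have "trace X' (mult X' (Omega V V') (superext V X' g \<sigma>0)) = trace X (mult X (ext W X M) (superext V X g \<rho>))"
      unfolding rhs_expand[OF g] lhs_expand[OF g, unfolded Nt_def] ..
    finally show ?thesis using cpos by simp
  qed
  thus ?thesis using pd cpos by blast
qed

end


lemma inf_affine:
  fixes k :: "'e \<Rightarrow> real"
  assumes ne: "E \<noteq> {}" and c: "c > 0" and lb: "\<And>e. e \<in> E \<Longrightarrow> L \<le> k e" and le: "(INF e\<in>E. k e) \<le> y"
  shows "(INF e\<in>E. a + c * k e) \<le> a + c * y"
proof -
  have bdd: "bdd_below ((\<lambda>e. a + c * k e) ` E)"
    by (rule bdd_belowI[where m = "a + c * L"]) (use lb c in \<open>auto intro: mult_left_mono\<close>)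
  have "((INF e\<in>E. a + c * k e) - a) / c \<le> (INF e\<in>E. k e)"
  proof (rule cINF_greatest[OF ne])
    fix e assume e: "e \<in> E"
    have "(INF e\<in>E. a + c * k e) \<le> a + c * k e" by (rule cINF_lower[OF bdd e])
    thus "((INF e\<in>E. a + c * k e) - a) / c \<le> k e" using c by (simp add: field_simps)
  qed
  hence "(INF e\<in>E. a + c * k e) \<le> a + c * (INF e\<in>E. k e)" using c by (simp add: field_simps)
  also have "\<dots> \<le> a + c * y" using le c by simp
  finally show ?thesis .
qed

lemma sadj_set_img: "sadj_set V X E {N} = (\<lambda>e. sadj X (superext V X e) N) ` E"
  by (auto simp: sadj_set_def)

lemma exp_dem_img:
  assumes "E \<noteq> {}"
  shows "exp_dem W X ((\<lambda>e. A e) ` E) \<rho> = (INF e\<in>E. Re (trace X (mult X (ext W X (A e)) \<rho>)))"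
  using assms by (simp add: exp_dem_def image_image)

lemma exp_dem_single: "exp_dem W X {N} \<rho> = Re (trace X (mult X (ext W X N) \<rho>))"
  by (simp add: exp_dem_def)

lemma trace_ext_compl:
  assumes X: "finite X" and WX: "W \<subseteq> X" and \<rho>: "op_on X \<rho>"
  shows "trace X (mult X (ext W X (minus_op (ident W) A)) \<rho>) = trace X \<rho> - trace X (mult X (ext W X A) \<rho>)"
  unfolding ext_minus trace_mult_minus ident_ext[OF WX] trace_ident[OF X] ..

lemma trace_ext_ident:
  assumes X: "finite X" and WX: "W \<subseteq> X"
  shows "trace X (mult X (ext W X (ident W)) \<rho>) = trace X \<rho>"
  unfolding ident_ext[OF WX] trace_ident[OF X] ..

lemma effect_ident: assumes finW: "finite W" shows "effect W (ident W)"
proof -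
  have "psd W (ident W)"
  proof -
    have "qform W (ident W) \<psi> = (\<Sum>t\<in>basis W. cnj (\<psi> t) * \<psi> t)" for \<psi>
      unfolding qform_def ident_def using finW
      by (intro sum.cong refl) (simp add: if_distrib[of "\<lambda>x. _ * x * _"] cong: if_cong)
    moreover have "Im (\<Sum>t\<in>basis W. cnj (\<psi> t) * \<psi> t) = 0 \<and> 0 \<le> Re (\<Sum>t\<in>basis W. cnj (\<psi> t) * \<psi> t)" for \<psi>
      unfolding Im_sum Re_sum using cnj_mult_self by (simp add: sum_nonneg)
    ultimately show ?thesis by (simp add: psd_def)
  qed
  moreover have "minus_op (ident W) (ident W) = (\<lambda>s t. 0)" by (simp add: minus_op_def fun_eq_iff)
  moreover have "psd W (\<lambda>s t. 0)" by (simp add: psd_def qform_def)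
  ultimately show ?thesis by (simp add: effect_def)
qed

lemma bounds_ext:
  assumes X: "finite X" and WX: "W \<subseteq> X" and N: "effect W N" and \<tau>: "psd X \<tau>"
  shows "0 \<le> Re (trace X (mult X (ext W X N) \<tau>))" "Re (trace X (mult X (ext W X N) \<tau>)) \<le> Re (trace X \<tau>)"
  using effect_trace[OF X effect_ext[OF X WX N] \<tau>] by auto


context pairing
begin

lemma g_bounds:
  assumes e: "e \<in> DProg V" and \<sigma>: "psd X' \<sigma>"
  shows "0 \<le> Re (trace X' (mult X' (Omega V V') (superext V X' e \<sigma>)))"
    "Re (trace X' (mult X' (Omega V V') (superext V X' e \<sigma>))) \<le> Re (trace X' \<sigma>)"
proof -
  have sp: "psd X' (superext V X' e \<sigma>)" using DProgD(5)[OF e finX' _ \<sigma>] by simp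
  show "0 \<le> Re (trace X' (mult X' (Omega V V') (superext V X' e \<sigma>)))"
    using effect_trace[OF finX' effect_Omega sp] by simp
  have "Re (trace X' (mult X' (Omega V V') (superext V X' e \<sigma>))) \<le> Re (trace X' (superext V X' e \<sigma>))"
    using effect_trace[OF finX' effect_Omega sp] by simp
  also have "\<dots> \<le> Re (trace X' \<sigma>)" using trace_superext_le[OF finX' _ e \<sigma>] by simp
  finally show "Re (trace X' (mult X' (Omega V V') (superext V X' e \<sigma>))) \<le> Re (trace X' \<sigma>)" .
qed

lemma sadj_trace_X':
  assumes e: "e \<in> DProg V"
  shows "trace X' (mult X' (ext X' X' (sadj X' (superext V X' e) (Omega V V'))) \<sigma>) =
         trace X' (mult X' (Omega V V') (superext V X' e \<sigma>))"
  using sadj_ext_trace[OF finX' _ _ e, of X' "Omega V V'" \<sigma>] ext_self[OF op_on_Omega] by simp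

lemma hyp_tot:
  assumes Hyp: "models_tot V X' F (sadj_set V X' E {Omega V V'}) {Omega V V'}"
    and ne: "E \<noteq> {}" and EP: "E \<subseteq> DProg V" and FP: "F \<subseteq> DProg V" and \<sigma>: "pdo X' \<sigma>" and f: "f \<in> F"
  shows "(INF e\<in>E. Re (trace X' (mult X' (Omega V V') (superext V X' e \<sigma>))))
      \<le> Re (trace X' (mult X' (Omega V V') (superext V X' f \<sigma>)))"
proof -
  have ps: "psd X' \<sigma>" using \<sigma> by (simp add: pdo_def)
  have "exp_dem X' X' (sadj_set V X' E {Omega V V'}) \<sigma> \<le>
      (INF f\<in>F. exp_dem X' X' {Omega V V'} (superext V X' f \<sigma>))"
    using Hyp \<sigma> finX' unfolding models_tot_def by blast
  moreover have "exp_dem X' X' (sadj_set V X' E {Omega V V'}) \<sigma> =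
      (INF e\<in>E. Re (trace X' (mult X' (Omega V V') (superext V X' e \<sigma>))))"
    unfolding sadj_set_img exp_dem_img[OF ne] using EP sadj_trace_X' by (intro INF_cong refl) auto
  moreover have "(INF f\<in>F. exp_dem X' X' {Omega V V'} (superext V X' f \<sigma>)) \<le>
      Re (trace X' (mult X' (Omega V V') (superext V X' f \<sigma>)))"
  proof -
    have "exp_dem X' X' {Omega V V'} (superext V X' f \<sigma>) = Re (trace X' (mult X' (Omega V V') (superext V X' f \<sigma>)))"
      if "f \<in> F" for f unfolding exp_dem_single ext_self[OF op_on_Omega] ..
    moreover have "bdd_below ((\<lambda>f. exp_dem X' X' {Omega V V'} (superext V X' f \<sigma>)) ` F)"
      by (rule bdd_belowI[where m = 0])
         (use FP ps g_bounds(1) in \<open>auto simp: exp_dem_single ext_self[OF op_on_Omega]\<close>)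
    ultimately show ?thesis using cINF_lower[of "\<lambda>f. exp_dem X' X' {Omega V V'} (superext V X' f \<sigma>)" F f] f by simp
  qed
  ultimately show ?thesis by linarith
qed

lemma hyp_par:
  assumes Hyp: "models_par V X' F (compl_set X' (sadj_set V X' E {Omega V V'})) {minus_op (ident X') (Omega V V')}"
    and ne: "E \<noteq> {}" and EP: "E \<subseteq> DProg V" and FP: "F \<subseteq> DProg V" and \<sigma>: "pdo X' \<sigma>" and f: "f \<in> F"
  shows "(INF e\<in>E. Re (trace X' \<sigma>) - Re (trace X' (mult X' (Omega V V') (superext V X' e \<sigma>))))
      \<le> Re (trace X' \<sigma>) - Re (trace X' (mult X' (Omega V V') (superext V X' f \<sigma>)))"
proof -
  have ps: "psd X' \<sigma>" using \<sigma> by (simp add: pdo_def)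
  have os: "op_on X' \<sigma>" using ps by (simp add: psd_def)
  have "exp_dem X' X' (compl_set X' (sadj_set V X' E {Omega V V'})) \<sigma> \<le>
      (INF f\<in>F. exp_dem X' X' {minus_op (ident X') (Omega V V')} (superext V X' f \<sigma>)
          + Re (trace X' \<sigma>) - Re (trace X' (superext V X' f \<sigma>)))"
    using Hyp \<sigma> finX' unfolding models_par_def by blast
  moreover have "exp_dem X' X' (compl_set X' (sadj_set V X' E {Omega V V'})) \<sigma> =
      (INF e\<in>E. Re (trace X' \<sigma>) - Re (trace X' (mult X' (Omega V V') (superext V X' e \<sigma>))))"
  proof -
    have ceq: "compl_set X' (sadj_set V X' E {Omega V V'}) = (\<lambda>e. minus_op (ident X') (sadj X' (superext V X' e) (Omega V V'))) ` E"
      unfolding compl_set_def sadj_set_img image_image ..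
    show ?thesis unfolding ceq exp_dem_img[OF ne]
    proof (rule INF_cong[OF refl])
      fix e assume "e \<in> E"
      hence e: "e \<in> DProg V" using EP by auto
      have "trace X' (mult X' (ext X' X' (minus_op (ident X') (sadj X' (superext V X' e) (Omega V V')))) \<sigma>)
          = trace X' \<sigma> - trace X' (mult X' (ext X' X' (sadj X' (superext V X' e) (Omega V V'))) \<sigma>)"
        by (rule trace_ext_compl[OF finX' subset_refl os])
      thus "Re (trace X' (mult X' (ext X' X' (minus_op (ident X') (sadj X' (superext V X' e) (Omega V V')))) \<sigma>))
          = Re (trace X' \<sigma>) - Re (trace X' (mult X' (Omega V V') (superext V X' e \<sigma>)))"
        unfolding sadj_trace_X'[OF e] by simp
    qed
  qed
  moreover have "(INF f\<in>F. exp_dem X' X' {minus_op (ident X') (Omega V V')} (superext V X' f \<sigma>)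
          + Re (trace X' \<sigma>) - Re (trace X' (superext V X' f \<sigma>))) \<le>
      Re (trace X' \<sigma>) - Re (trace X' (mult X' (Omega V V') (superext V X' f \<sigma>)))"
  proof -
    have eq: "exp_dem X' X' {minus_op (ident X') (Omega V V')} (superext V X' f \<sigma>)
          + Re (trace X' \<sigma>) - Re (trace X' (superext V X' f \<sigma>)) =
        Re (trace X' \<sigma>) - Re (trace X' (mult X' (Omega V V') (superext V X' f \<sigma>)))" for f
    proof -
      have "trace X' (mult X' (ext X' X' (minus_op (ident X') (Omega V V'))) (superext V X' f \<sigma>)) =
          trace X' (superext V X' f \<sigma>) - trace X' (mult X' (ext X' X' (Omega V V')) (superext V X' f \<sigma>))"
        by (rule trace_ext_compl[OF finX' subset_refl op_on_superext])
      thus ?thesis unfolding exp_dem_single ext_self[OF op_on_Omega] by simp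
    qed
    have "bdd_below ((\<lambda>f. Re (trace X' \<sigma>) - Re (trace X' (mult X' (Omega V V') (superext V X' f \<sigma>)))) ` F)"
    proof (rule bdd_belowI[where m = 0])
      fix x assume "x \<in> (\<lambda>f. Re (trace X' \<sigma>) - Re (trace X' (mult X' (Omega V V') (superext V X' f \<sigma>)))) ` F"
      then obtain f' where "f' \<in> F" "x = Re (trace X' \<sigma>) - Re (trace X' (mult X' (Omega V V') (superext V X' f' \<sigma>)))" by blast
      thus "0 \<le> x" using g_bounds(2)[of f' \<sigma>] FP ps by auto
    qed
    from cINF_lower[OF this f] show ?thesis unfolding eq .
  qed
  ultimately show ?thesis by linarith
qed

lemma KT:
  assumes Hyp: "models_tot V X' F (sadj_set V X' E {Omega V V'}) {Omega V V'}"
    and ne: "E \<noteq> {}" and EP: "E \<subseteq> DProg V" and FP: "F \<subseteq> DProg V"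
    and X: "finite X" and VX: "V \<subseteq> X" and WX: "W \<subseteq> X" and N: "effect W N" and \<rho>: "pdo X \<rho>" and f: "f \<in> F"
  shows "(INF e\<in>E. Re (trace X (mult X (ext W X N) (superext V X e \<rho>))))
     \<le> Re (trace X (mult X (ext W X N) (superext V X f \<rho>)))"
proof -
  interpret r: rep V V' X W N \<rho>
    using N \<rho> X VX WX by unfold_locales (auto simp: effect_def pdo_def)
  obtain \<sigma> c where \<sigma>: "pdo X' \<sigma>" and c: "c > 0" and eq: "\<forall>g\<in>DProg V. trace X (mult X (ext W X N) (superext V X g \<rho>)) =
      complex_of_real c * trace X' (mult X' (Omega V V') (superext V X' g \<sigma>))"
    using r.rep_exists by blast
  define gg where "gg e = Re (trace X' (mult X' (Omega V V') (superext V X' e \<sigma>)))" for e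
  have ps: "psd X' \<sigma>" using \<sigma> by (simp add: pdo_def)
  have v: "Re (trace X (mult X (ext W X N) (superext V X e \<rho>))) = 0 + c * gg e" if "e \<in> DProg V" for e
    using eq that by (simp add: gg_def)
  have "(INF e\<in>E. Re (trace X (mult X (ext W X N) (superext V X e \<rho>)))) = (INF e\<in>E. 0 + c * gg e)"
    using EP v by (intro INF_cong refl) auto
  also have "\<dots> \<le> 0 + c * gg f"
    by (rule inf_affine[OF ne c, where L = 0])
       (use EP ps g_bounds(1) hyp_tot[OF Hyp ne EP FP \<sigma> f] in \<open>auto simp: gg_def\<close>)
  also have "\<dots> = Re (trace X (mult X (ext W X N) (superext V X f \<rho>)))" using v f FP by auto
  finally show ?thesis .
qed

lemma KP:
  assumes Hyp: "models_par V X' F (compl_set X' (sadj_set V X' E {Omega V V'})) {minus_op (ident X') (Omega V V')}"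
    and ne: "E \<noteq> {}" and EP: "E \<subseteq> DProg V" and FP: "F \<subseteq> DProg V"
    and X: "finite X" and VX: "V \<subseteq> X" and WX: "W \<subseteq> X" and N: "effect W N" and \<rho>: "pdo X \<rho>" and f: "f \<in> F"
  shows "(INF e\<in>E. Re (trace X \<rho>) - Re (trace X (mult X (ext W X N) (superext V X e \<rho>))))
     \<le> Re (trace X \<rho>) - Re (trace X (mult X (ext W X N) (superext V X f \<rho>)))"
proof -
  interpret r: rep V V' X W N \<rho>
    using N \<rho> X VX WX by unfold_locales (auto simp: effect_def pdo_def)
  obtain \<sigma> c where \<sigma>: "pdo X' \<sigma>" and c: "c > 0" and eq: "\<forall>g\<in>DProg V. trace X (mult X (ext W X N) (superext V X g \<rho>)) =
      complex_of_real c * trace X' (mult X' (Omega V V') (superext V X' g \<sigma>))"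
    using r.rep_exists by blast
  define gg where "gg e = Re (trace X' \<sigma>) - Re (trace X' (mult X' (Omega V V') (superext V X' e \<sigma>)))" for e
  define a where "a = Re (trace X \<rho>) - c * Re (trace X' \<sigma>)"
  have ps: "psd X' \<sigma>" using \<sigma> by (simp add: pdo_def)
  have v: "Re (trace X \<rho>) - Re (trace X (mult X (ext W X N) (superext V X e \<rho>))) = a + c * gg e" if "e \<in> DProg V" for e
    using eq that by (simp add: gg_def a_def algebra_simps)
  have "(INF e\<in>E. Re (trace X \<rho>) - Re (trace X (mult X (ext W X N) (superext V X e \<rho>)))) = (INF e\<in>E. a + c * gg e)"
    using EP v by (intro INF_cong refl) auto
  also have "\<dots> \<le> a + c * gg f"
    by (rule inf_affine[OF ne c, where L = 0])
       (use EP ps g_bounds(2) hyp_par[OF Hyp ne EP FP \<sigma> f] in \<open>auto simp: gg_def\<close>)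
  also have "\<dots> = Re (trace X \<rho>) - Re (trace X (mult X (ext W X N) (superext V X f \<rho>)))" using v f FP by auto
  finally show ?thesis .
qed

end


lemma expdem_nonneg:
  assumes X: "finite X" and WX: "W \<subseteq> X" and \<Psi>: "\<Psi> \<subseteq> Collect (effect W)" and \<tau>: "psd X \<tau>"
  shows "0 \<le> exp_dem W X \<Psi> \<tau>"
proof (cases "\<Psi> = {}")
  case True
  then show ?thesis using psd_trace[OF X \<tau>] by (simp add: exp_dem_def)
next
  case False
  have "0 \<le> (INF M\<in>\<Psi>. Re (trace X (mult X (ext W X M) \<tau>)))"
    by (rule cINF_greatest[OF False]) (use bounds_ext(1)[OF X WX _ \<tau>] \<Psi> in auto)
  then show ?thesis using False by (simp add: exp_dem_def)
qed

lemma expdem_le: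
  assumes X: "finite X" and WX: "W \<subseteq> X" and \<Psi>: "\<Psi> \<subseteq> Collect (effect W)" and \<tau>: "psd X \<tau>" and N: "N \<in> \<Psi>"
  shows "exp_dem W X \<Psi> \<tau> \<le> Re (trace X (mult X (ext W X N) \<tau>))"
proof -
  have ne: "\<Psi> \<noteq> {}" using N by auto
  have "bdd_below ((\<lambda>M. Re (trace X (mult X (ext W X M) \<tau>))) ` \<Psi>)"
  proof (rule bdd_belowI[where m = 0])
    fix x assume "x \<in> (\<lambda>M. Re (trace X (mult X (ext W X M) \<tau>))) ` \<Psi>"
    then obtain M where "M \<in> \<Psi>" "x = Re (trace X (mult X (ext W X M) \<tau>))" by blast
    thus "0 \<le> x" using bounds_ext(1)[OF X WX _ \<tau>, of M] \<Psi> by auto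
  qed
  from cINF_lower[OF this N] show ?thesis using ne by (simp add: exp_dem_def)
qed

context pairing
begin

lemma Theta_effects:
  assumes EP: "E \<subseteq> DProg V"
  shows "sadj_set V X' E {Omega V V'} \<subseteq> Collect (effect X')"
proof
  fix M assume "M \<in> sadj_set V X' E {Omega V V'}"
  then obtain e where e: "e \<in> E" and M: "M = sadj X' (superext V X' e) (Omega V V')"
    unfolding sadj_set_img by blast
  have eP: "e \<in> DProg V" using e EP by auto
  show "M \<in> Collect (effect X')"
    unfolding M sadj_dual[OF finX' Un_upper1 eP] using effect_dual[OF finX' Un_upper1 eP effect_Omega] by simp
qed

lemma Thetac_effects:
  assumes EP: "E \<subseteq> DProg V"
  shows "compl_set X' (sadj_set V X' E {Omega V V'}) \<subseteq> Collect (effect X')"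
  using Theta_effects[OF EP] effect_compl unfolding compl_set_def by auto

lemma tot_fwd:
  assumes ne: "E \<noteq> {}" and EP: "E \<subseteq> DProg V"
  shows "models_tot V X' E (sadj_set V X' E {Omega V V'}) {Omega V V'}"
  unfolding models_tot_def
proof (intro allI impI)
  fix X \<rho> assume h: "finite X \<and> V \<union> X' \<subseteq> X \<and> pdo X \<rho>"
  hence X: "finite X" and XX: "X' \<subseteq> X" by auto
  have "exp_dem X' X (sadj_set V X' E {Omega V V'}) \<rho> = (INF e\<in>E. exp_dem X' X {Omega V V'} (superext V X e \<rho>))"
    unfolding sadj_set_img exp_dem_img[OF ne] exp_dem_single
  proof (rule INF_cong[OF refl])
    fix e assume "e \<in> E"
    hence e: "e \<in> DProg V" using EP by auto
    show "Re (trace X (mult X (ext X' X (sadj X' (superext V X' e) (Omega V V'))) \<rho>)) =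
        Re (trace X (mult X (ext X' X (Omega V V')) (superext V X e \<rho>)))"
      using sadj_ext_trace[OF X _ XX e, of "Omega V V'" \<rho>] by simp
  qed
  thus "exp_dem X' X (sadj_set V X' E {Omega V V'}) \<rho> \<le> (INF e\<in>E. exp_dem X' X {Omega V V'} (superext V X e \<rho>))"
    by simp
qed

lemma par_fwd:
  assumes ne: "E \<noteq> {}" and EP: "E \<subseteq> DProg V"
  shows "models_par V X' E (compl_set X' (sadj_set V X' E {Omega V V'})) {minus_op (ident X') (Omega V V')}"
  unfolding models_par_def
proof (intro allI impI)
  fix X \<rho> assume h: "finite X \<and> V \<union> X' \<subseteq> X \<and> pdo X \<rho>"
  hence X: "finite X" and XX: "X' \<subseteq> X" and \<rho>: "pdo X \<rho>" by auto
  have o\<rho>: "op_on X \<rho>" using \<rho> by (simp add: pdo_def psd_def)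
  have ceq: "compl_set X' (sadj_set V X' E {Omega V V'}) = (\<lambda>e. minus_op (ident X') (sadj X' (superext V X' e) (Omega V V'))) ` E"
    unfolding compl_set_def sadj_set_img image_image ..
  have "exp_dem X' X (compl_set X' (sadj_set V X' E {Omega V V'})) \<rho> =
      (INF e\<in>E. exp_dem X' X {minus_op (ident X') (Omega V V')} (superext V X e \<rho>) + Re (trace X \<rho>) - Re (trace X (superext V X e \<rho>)))"
    unfolding ceq exp_dem_img[OF ne] exp_dem_single
  proof (rule INF_cong[OF refl])
    fix e assume "e \<in> E"
    hence e: "e \<in> DProg V" using EP by auto
    have a: "trace X (mult X (ext X' X (minus_op (ident X') (sadj X' (superext V X' e) (Omega V V')))) \<rho>) =
        trace X \<rho> - trace X (mult X (ext X' X (Omega V V')) (superext V X e \<rho>))"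
      unfolding trace_ext_compl[OF X XX o\<rho>] sadj_ext_trace[OF X Un_upper1 XX e] by simp
    have b: "trace X (mult X (ext X' X (minus_op (ident X') (Omega V V'))) (superext V X e \<rho>)) =
        trace X (superext V X e \<rho>) - trace X (mult X (ext X' X (Omega V V')) (superext V X e \<rho>))"
      by (rule trace_ext_compl[OF X XX op_on_superext])
    show "Re (trace X (mult X (ext X' X (minus_op (ident X') (sadj X' (superext V X' e) (Omega V V')))) \<rho>)) =
        Re (trace X (mult X (ext X' X (minus_op (ident X') (Omega V V'))) (superext V X e \<rho>))) + Re (trace X \<rho>) - Re (trace X (superext V X e \<rho>))"
      unfolding a b by simp
  qed
  thus "exp_dem X' X (compl_set X' (sadj_set V X' E {Omega V V'})) \<rho> \<le>
      (INF e\<in>E. exp_dem X' X {minus_op (ident X') (Omega V V')} (superext V X e \<rho>) + Re (trace X \<rho>) - Re (trace X (superext V X e \<rho>)))"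
    by simp
qed

end


context pairing
begin

lemma tot_bwd:
  assumes H: "models_tot V X' F (sadj_set V X' E {Omega V V'}) {Omega V V'}"
    and neE: "E \<noteq> {}" and EP: "E \<subseteq> DProg V" and neF: "F \<noteq> {}" and FP: "F \<subseteq> DProg V"
  shows "refines_T V E F"
  unfolding refines_T_def
proof (intro allI impI)
  fix W \<Theta> \<Psi>
  assume hW: "finite W \<and> \<Theta> \<subseteq> Collect (effect W) \<and> \<Psi> \<subseteq> Collect (effect W)"
  assume HE: "models_tot V W E \<Theta> \<Psi>"
  hence W: "finite W" and \<Psi>: "\<Psi> \<subseteq> Collect (effect W)" using hW by auto
  show "models_tot V W F \<Theta> \<Psi>"
    unfolding models_tot_def
  proof (intro allI impI)
    fix X \<rho> assume hX: "finite X \<and> V \<union> W \<subseteq> X \<and> pdo X \<rho>"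
    hence X: "finite X" and VX: "V \<subseteq> X" and WX: "W \<subseteq> X" and \<rho>: "pdo X \<rho>" by auto
    have ps: "psd X \<rho>" using \<rho> by (simp add: pdo_def)
    have sp: "psd X (superext V X e \<rho>)" if "e \<in> DProg V" for e using DProgD(5)[OF that X VX ps] .
    have h1: "exp_dem W X \<Theta> \<rho> \<le> (INF e\<in>E. exp_dem W X \<Psi> (superext V X e \<rho>))"
      using HE hX unfolding models_tot_def by blast
    have h2: "(INF e\<in>E. exp_dem W X \<Psi> (superext V X e \<rho>)) \<le> exp_dem W X \<Psi> (superext V X f \<rho>)"
      if f: "f \<in> F" for f
    proof (cases "\<Psi> = {}")
      case True
      have "(INF e\<in>E. exp_dem W X \<Psi> (superext V X e \<rho>)) =
          (INF e\<in>E. Re (trace X (mult X (ext W X (ident W)) (superext V X e \<rho>))))"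
        using True by (simp add: exp_dem_def trace_ext_ident[OF X WX])
      also have "\<dots> \<le> Re (trace X (mult X (ext W X (ident W)) (superext V X f \<rho>)))"
        by (rule KT[OF H neE EP FP X VX WX effect_ident[OF W] \<rho> f])
      also have "\<dots> = exp_dem W X \<Psi> (superext V X f \<rho>)"
        using True by (simp add: exp_dem_def trace_ext_ident[OF X WX])
      finally show ?thesis .
    next
      case False
      have "(INF e\<in>E. exp_dem W X \<Psi> (superext V X e \<rho>)) \<le>
          (INF N\<in>\<Psi>. Re (trace X (mult X (ext W X N) (superext V X f \<rho>))))"
      proof (rule cINF_greatest[OF False])
        fix N assume N: "N \<in> \<Psi>"
        have NE: "effect W N" using N \<Psi> by auto
        have "(INF e\<in>E. exp_dem W X \<Psi> (superext V X e \<rho>)) \<le> (INF e\<in>E. Re (trace X (mult X (ext W X N) (superext V X e \<rho>))))"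
        proof (rule cINF_mono[OF neE])
          show "bdd_below ((\<lambda>e. exp_dem W X \<Psi> (superext V X e \<rho>)) ` E)"
          proof (rule bdd_belowI[where m = 0])
            fix x assume "x \<in> (\<lambda>e. exp_dem W X \<Psi> (superext V X e \<rho>)) ` E"
            then obtain e where "e \<in> E" "x = exp_dem W X \<Psi> (superext V X e \<rho>)" by blast
            thus "0 \<le> x" using expdem_nonneg[OF X WX \<Psi> sp, of e] EP by auto
          qed
          fix m assume m: "m \<in> E"
          show "\<exists>n\<in>E. exp_dem W X \<Psi> (superext V X n \<rho>) \<le> Re (trace X (mult X (ext W X N) (superext V X m \<rho>)))"
            using expdem_le[OF X WX \<Psi> sp N, of m] m EP by auto
        qed
        also have "\<dots> \<le> Re (trace X (mult X (ext W X N) (superext V X f \<rho>)))"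
          by (rule KT[OF H neE EP FP X VX WX NE \<rho> f])
        finally show "(INF e\<in>E. exp_dem W X \<Psi> (superext V X e \<rho>)) \<le> Re (trace X (mult X (ext W X N) (superext V X f \<rho>)))" .
      qed
      then show ?thesis using False by (simp add: exp_dem_def)
    qed
    have "(INF e\<in>E. exp_dem W X \<Psi> (superext V X e \<rho>)) \<le> (INF f\<in>F. exp_dem W X \<Psi> (superext V X f \<rho>))"
      by (rule cINF_greatest[OF neF]) (rule h2)
    with h1 show "exp_dem W X \<Theta> \<rho> \<le> (INF f\<in>F. exp_dem W X \<Psi> (superext V X f \<rho>))" by linarith
  qed
qed

lemma par_bwd:
  assumes H: "models_par V X' F (compl_set X' (sadj_set V X' E {Omega V V'})) {minus_op (ident X') (Omega V V')}"
    and neE: "E \<noteq> {}" and EP: "E \<subseteq> DProg V" and neF: "F \<noteq> {}" and FP: "F \<subseteq> DProg V"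
  shows "refines_P V E F"
  unfolding refines_P_def
proof (intro allI impI)
  fix W \<Theta> \<Psi>
  assume hW: "finite W \<and> \<Theta> \<subseteq> Collect (effect W) \<and> \<Psi> \<subseteq> Collect (effect W)"
  assume HE: "models_par V W E \<Theta> \<Psi>"
  hence W: "finite W" and \<Psi>: "\<Psi> \<subseteq> Collect (effect W)" using hW by auto
  show "models_par V W F \<Theta> \<Psi>"
    unfolding models_par_def
  proof (intro allI impI)
    fix X \<rho> assume hX: "finite X \<and> V \<union> W \<subseteq> X \<and> pdo X \<rho>"
    hence X: "finite X" and VX: "V \<subseteq> X" and WX: "W \<subseteq> X" and \<rho>: "pdo X \<rho>" by auto
    have ps: "psd X \<rho>" using \<rho> by (simp add: pdo_def)
    have sp: "psd X (superext V X e \<rho>)" if "e \<in> DProg V" for e using DProgD(5)[OF that X VX ps] .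
    have tl: "Re (trace X (superext V X e \<rho>)) \<le> Re (trace X \<rho>)" if "e \<in> DProg V" for e
      using trace_superext_le[OF X VX that ps] .
    define hh where "hh e = exp_dem W X \<Psi> (superext V X e \<rho>) + Re (trace X \<rho>) - Re (trace X (superext V X e \<rho>))" for e
    have h1: "exp_dem W X \<Theta> \<rho> \<le> (INF e\<in>E. hh e)"
      using HE hX unfolding models_par_def hh_def by blast
    have h2: "(INF e\<in>E. hh e) \<le> hh f" if f: "f \<in> F" for f
    proof (cases "\<Psi> = {}")
      case True
      have "(INF e\<in>E. hh e) = (INF e\<in>E. Re (trace X \<rho>))"
        using True by (simp add: hh_def exp_dem_def)
      also have "\<dots> = Re (trace X \<rho>)" using neE by simp
      also have "\<dots> = hh f" using True by (simp add: hh_def exp_dem_def)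
      finally show ?thesis by simp
    next
      case False
      define D where "D = Re (trace X \<rho>) - Re (trace X (superext V X f \<rho>))"
      have "(INF e\<in>E. hh e) - D \<le> (INF N\<in>\<Psi>. Re (trace X (mult X (ext W X N) (superext V X f \<rho>))))"
      proof (rule cINF_greatest[OF False])
        fix N assume N: "N \<in> \<Psi>"
        have NE: "effect W N" using N \<Psi> by auto
        have "(INF e\<in>E. hh e) \<le> (INF e\<in>E. Re (trace X (mult X (ext W X N) (superext V X e \<rho>))) + Re (trace X \<rho>) - Re (trace X (superext V X e \<rho>)))"
        proof (rule cINF_mono[OF neE])
          show "bdd_below (hh ` E)"
          proof (rule bdd_belowI[where m = 0])
            fix x assume "x \<in> hh ` E"
            then obtain e where e: "e \<in> E" "x = hh e" by blast
            hence eP: "e \<in> DProg V" using EP by auto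
            show "0 \<le> x" using expdem_nonneg[OF X WX \<Psi> sp[OF eP]] tl[OF eP] e(2) by (simp add: hh_def)
          qed
          fix m assume m: "m \<in> E"
          hence mP: "m \<in> DProg V" using EP by auto
          show "\<exists>n\<in>E. hh n \<le> Re (trace X (mult X (ext W X N) (superext V X m \<rho>))) + Re (trace X \<rho>) - Re (trace X (superext V X m \<rho>))"
          proof
            show "hh m \<le> Re (trace X (mult X (ext W X N) (superext V X m \<rho>))) + Re (trace X \<rho>) - Re (trace X (superext V X m \<rho>))"
              using expdem_le[OF X WX \<Psi> sp[OF mP] N] by (simp add: hh_def)
          qed (rule m)
        qed
        also have "\<dots> = (INF e\<in>E. Re (trace X \<rho>) - Re (trace X (mult X (ext W X (minus_op (ident W) N)) (superext V X e \<rho>))))"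
          by (intro INF_cong refl) (simp add: trace_ext_compl[OF X WX op_on_superext])
        also have "\<dots> \<le> Re (trace X \<rho>) - Re (trace X (mult X (ext W X (minus_op (ident W) N)) (superext V X f \<rho>)))"
          by (rule KP[OF H neE EP FP X VX WX effect_compl[OF NE] \<rho> f])
        also have "\<dots> = Re (trace X (mult X (ext W X N) (superext V X f \<rho>))) + D"
          by (simp add: trace_ext_compl[OF X WX op_on_superext] D_def)
        finally show "(INF e\<in>E. hh e) - D \<le> Re (trace X (mult X (ext W X N) (superext V X f \<rho>)))" by simp
      qed
      then show ?thesis using False by (simp add: hh_def exp_dem_def D_def)
    qed
    have "(INF e\<in>E. hh e) \<le> (INF f\<in>F. hh f)"
      by (rule cINF_greatest[OF neF]) (rule h2)
    with h1 show "exp_dem W X \<Theta> \<rho> \<le> (INF f\<in>F. exp_dem W X \<Psi> (superext V X f \<rho>) + Re (trace X \<rho>) - Re (trace X (superext V X f \<rho>)))"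
      unfolding hh_def by linarith
  qed
qed

end


theorem theorem5p3:
  fixes V V' :: "qvar set" and E F :: "sop set"
  assumes "finite V" and "E \<in> NProg V" and "F \<in> NProg V"
    and "finite V'" and "card V' = card V" and "V \<inter> V' = {}"
  shows "(refines_T V E F \<longleftrightarrow>
            models_tot V (V \<union> V') F (sadj_set V (V \<union> V') E {Omega V V'}) {Omega V V'})
       \<and> (refines_P V E F \<longleftrightarrow>
            models_par V (V \<union> V') F
              (compl_set (V \<union> V') (sadj_set V (V \<union> V') E {Omega V V'}))
              {minus_op (ident (V \<union> V')) (Omega V V')})"
proof -
  interpret pairing V V' using assms by unfold_locales auto
  have neE: "E \<noteq> {}" and EP: "E \<subseteq> DProg V" using assms(2) by (auto simp: NProg_def)
  have neF: "F \<noteq> {}" and FP: "F \<subseteq> DProg V" using assms(3) by (auto simp: NProg_def)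
  have Om: "{Omega V V'} \<subseteq> Collect (effect X')" using effect_Omega by simp
  have Omc: "{minus_op (ident X') (Omega V V')} \<subseteq> Collect (effect X')" using effect_compl[OF effect_Omega] by simp
  show ?thesis
  proof (intro conjI iffI)
    assume r: "refines_T V E F"
    show "models_tot V X' F (sadj_set V X' E {Omega V V'}) {Omega V V'}"
    proof -
      have p: "finite X' \<and> sadj_set V X' E {Omega V V'} \<subseteq> Collect (effect X') \<and> {Omega V V'} \<subseteq> Collect (effect X')"
        using finX' Theta_effects[OF EP] Om by (intro conjI)
      show ?thesis using r[unfolded refines_T_def, rule_format, OF p tot_fwd[OF neE EP]] .
    qed
  next
    assume h: "models_tot V X' F (sadj_set V X' E {Omega V V'}) {Omega V V'}"
    show "refines_T V E F" by (rule tot_bwd[OF h neE EP neF FP])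
  next
    assume r: "refines_P V E F"
    show "models_par V X' F (compl_set X' (sadj_set V X' E {Omega V V'})) {minus_op (ident X') (Omega V V')}"
    proof -
      have p: "finite X' \<and> compl_set X' (sadj_set V X' E {Omega V V'}) \<subseteq> Collect (effect X') \<and> {minus_op (ident X') (Omega V V')} \<subseteq> Collect (effect X')"
        using finX' Thetac_effects[OF EP] Omc by (intro conjI)
      show ?thesis using r[unfolded refines_P_def, rule_format, OF p par_fwd[OF neE EP]] .
    qed
  next
    assume h: "models_par V X' F (compl_set X' (sadj_set V X' E {Omega V V'})) {minus_op (ident X') (Omega V V')}"
    show "refines_P V E F" by (rule par_bwd[OF h neE EP neF FP])
  qed
qed


end
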